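(* $\mathrm{WM}\preceq F_{\mathrm{weak}}\preceq \mathrm{WL}_{3/2}$. That is, for all graphs $G,H$: if $\mathrm{WL}_{3/2}(G)=\mathrm{WL}_{3/2}(H)$ then $F_{\mathrm{weak}}(G)=F_{\mathrm{weak}}(H)$, and if $F_{\mathrm{weak}}(G)=F_{\mathrm{weak}}(H)$ then $\mathrm{WM}(G)=\mathrm{WM}(H)$.
   Context: Graphs are finite, simple and undirected; an $n$-vertex graph $G$ has $V(G)=\{1,\dots,n\}$ and adjacency matrix $A$. $\mathrm{Spec}(G)$ is the multiset of eigenvalues of $A$. Let $\mu_1<\dots<\mu_m$ be the distinct eigenvalues, $P_i$ the orthogonal projection matrix onto the eigenspace of $\mu_i$, $P_*(x,y)=(P_1(x,y),\dots,P_m(x,y))$. Fürer's weak spectral invariant is $F_{\mathrm{weak}}(G)=\big(\mathrm{Spec}(G),\{\!\{(P_*(x,x),\{\!\{P_*(x,y)\}\!\}_{y\in V(G)})\}\!\}_{x\in V(G)}\big)$, where $\{\!\{\cdot\}\!\}$ denotes a multiset. Let $w_k(x,y)$ be the number of walks of length $k$ from $x$ to $y$. The walk matrix has entries $W(x,k)=\sum_{y}w_k(x,y)$ for $0\le k\le n-1$, and $\mathrm{WM}(G)=\{\!\{(W(x,0),\dots,W(x,n-1))\}\!\}_{x\in V(G)}$. Color refinement (1-WL) on a vertex-colored graph: $C^0(x)$ is the color of $x$ (uniform if the graph is uncolored), and $C^{r+1}(x)=\big(C^r(x),\{\!\{C^r(y)\}\!\}_{y\in N(x)}\big)$, where $N(x)$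 is the neighborhood. $\mathrm{WL}_1(G)=\{\!\{C^n(x)\}\!\}_{x\in V(G)}$. For a vertex $x$, $G_x$ is $G$ with $x$ individualized, i.e. $x$ receives a special new color (the same special color for every choice of $x$) and the other vertices keep their colors. $\mathrm{WL}_{3/2}(G)=\{\!\{\mathrm{WL}_1(G_x)\}\!\}_{x\in V(G)}$. *)

theory Defs
  imports "Jordan_Normal_Form.Char_Poly" "HOL-Library.Multiset"
begin

text \<open>A finite simple undirected graph on n vertices is a pair (n, E) with vertex set
  {0..<n} and a symmetric irreflexive edge relation E living on the vertex set.
  (We index vertices 0..n-1 instead of 1..n; all invariants below are label-independent.)\<close>

type_synonym graph = "nat \<times> (nat \<Rightarrow> nat \<Rightarrow> bool)"

definition verts :: "graph \<Rightarrow> nat set" where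
  "verts G = {0..<fst G}"

definition adj :: "graph \<Rightarrow> nat \<Rightarrow> nat \<Rightarrow> bool" where
  "adj G x y = snd G x y"

definition is_graph :: "graph \<Rightarrow> bool" where
  "is_graph G \<longleftrightarrow>
     (\<forall>x y. adj G x y \<longrightarrow> x \<in> verts G \<and> y \<in> verts G) \<and>
     (\<forall>x y. adj G x y \<longrightarrow> adj G y x) \<and>
     (\<forall>x. \<not> adj G x x)"

definition nbrs :: "graph \<Rightarrow> nat \<Rightarrow> nat set" where
  "nbrs G x = {y \<in> verts G. adj G x y}"

definition adj_mat :: "graph \<Rightarrow> real mat" where
  "adj_mat G = mat (fst G) (fst G) (\<lambda>(i, j). if adj G i j then 1 else 0)"

definition Spec :: "graph \<Rightarrow> real multiset" where
  "Spec G = proots (char_poly (adj_mat G))"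

definition distinct_eigs :: "graph \<Rightarrow> real list" where
  "distinct_eigs G = sorted_list_of_set (set_mset (Spec G))"

definition eigenspace :: "graph \<Rightarrow> real \<Rightarrow> real vec set" where
  "eigenspace G \<mu> = {v \<in> carrier_vec (fst G). adj_mat G *\<^sub>v v = \<mu> \<cdot>\<^sub>v v}"

definition eig_proj :: "graph \<Rightarrow> real \<Rightarrow> real mat" where
  "eig_proj G \<mu> = (THE P. P \<in> carrier_mat (fst G) (fst G) \<and>
      (\<forall>v \<in> carrier_vec (fst G). P *\<^sub>v v \<in> eigenspace G \<mu> \<and>
         (\<forall>w \<in> eigenspace G \<mu>. (v - P *\<^sub>v v) \<bullet> w = 0)))"

definition Pstar :: "graph \<Rightarrow> nat \<Rightarrow> nat \<Rightarrow> real list" where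
  "Pstar G x y = map (\<lambda>\<mu>. eig_proj G \<mu> $$ (x, y)) (distinct_eigs G)"

definition F_weak :: "graph \<Rightarrow> real multiset \<times> (real list \<times> real list multiset) multiset" where
  "F_weak G = (Spec G,
     image_mset (\<lambda>x. (Pstar G x x, image_mset (\<lambda>y. Pstar G x y) (mset_set (verts G))))
       (mset_set (verts G)))"

definition walks :: "graph \<Rightarrow> nat \<Rightarrow> nat \<Rightarrow> nat \<Rightarrow> nat list set" where
  "walks G k x y = {p. length p = Suc k \<and> p ! 0 = x \<and> p ! k = y \<and> set p \<subseteq> verts G \<and>
                       (\<forall>i<k. adj G (p ! i) (p ! Suc i))}"

definition num_walks :: "graph \<Rightarrow> nat \<Rightarrow> nat \<Rightarrow> nat \<Rightarrow> nat" where
  "num_walks G k x y = card (walks G k x y)"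

definition W :: "graph \<Rightarrow> nat \<Rightarrow> nat \<Rightarrow> nat" where
  "W G x k = (\<Sum>y\<in>verts G. num_walks G k x y)"

definition WM :: "graph \<Rightarrow> nat list multiset" where
  "WM G = image_mset (\<lambda>x. map (W G x) [0..<fst G]) (mset_set (verts G))"

datatype color = Init nat | Refine color "color multiset"

fun cr_color :: "graph \<Rightarrow> (nat \<Rightarrow> nat) \<Rightarrow> nat \<Rightarrow> nat \<Rightarrow> color" where
  "cr_color G c 0 x = Init (c x)"
| "cr_color G c (Suc r) x =
     Refine (cr_color G c r x) (image_mset (cr_color G c r) (mset_set (nbrs G x)))"

definition WL1_col :: "graph \<Rightarrow> (nat \<Rightarrow> nat) \<Rightarrow> color multiset" where
  "WL1_col G c = image_mset (cr_color G c (fst G)) (mset_set (verts G))"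

definition WL1 :: "graph \<Rightarrow> color multiset" where
  "WL1 G = WL1_col G (\<lambda>_. 0)"

definition individualize :: "nat \<Rightarrow> nat \<Rightarrow> nat" where
  "individualize x = (\<lambda>y. if y = x then 1 else 0)"

definition WL_3_2 :: "graph \<Rightarrow> color multiset multiset" where
  "WL_3_2 G = image_mset (\<lambda>x. WL1_col G (individualize x)) (mset_set (verts G))"

end

theory Submission
  imports Defs "Jordan_Normal_Form.Schur_Decomposition"
begin



lemma mat_mult_index:
  assumes "A \<in> carrier_mat n m" "B \<in> carrier_mat m p" "i < n" "j < p"
  shows "(A * B) $$ (i,j) = (\<Sum>l<m. A $$ (i,l) * B $$ (l,j))"
  using assms by (auto simp: scalar_prod_def lessThan_atLeast0 intro!: sum.cong)

lemma mat_vec_index: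
  assumes "A \<in> carrier_mat n m" "v \<in> carrier_vec m" "i < n"
  shows "(A *\<^sub>v v) $ i = (\<Sum>j<m. A $$ (i,j) * v $ j)"
  using assms by (auto simp: scalar_prod_def lessThan_atLeast0 intro!: sum.cong)

lemma adj_mat_carrier: "adj_mat G \<in> carrier_mat (fst G) (fst G)"
  by (simp add: adj_mat_def)

lemma adj_mat_index: "i < fst G \<Longrightarrow> j < fst G \<Longrightarrow> adj_mat G $$ (i,j) = (if adj G i j then 1 else 0)"
  by (simp add: adj_mat_def)

section \<open>Walks\<close>

lemma finite_walks: "finite (walks G k x y)"
proof -
  have "walks G k x y \<subseteq> {p. set p \<subseteq> verts G \<and> length p = Suc k}"
    unfolding walks_def by auto
  moreover have "finite {p. set p \<subseteq> verts G \<and> length p = Suc k}"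
    by (rule finite_lists_length_eq) (simp add: verts_def)
  ultimately show ?thesis by (rule finite_subset)
qed

lemma walks_0: "walks G 0 x y = (if x = y \<and> x \<in> verts G then {[x]} else {})"
proof -
  have "p \<in> walks G 0 x y \<longleftrightarrow> (x = y \<and> x \<in> verts G \<and> p = [x])" for p
  proof
    assume "p \<in> walks G 0 x y"
    then have "length p = 1" "p ! 0 = x" "p ! 0 = y" "set p \<subseteq> verts G" by (auto simp: walks_def)
    then show "x = y \<and> x \<in> verts G \<and> p = [x]"
      by (cases p) auto
  qed (auto simp: walks_def)
  then show ?thesis by auto
qed

lemma walks_Suc:
  assumes y: "y \<in> verts G"
  shows "walks G (Suc k) x y = (\<Union>z\<in>{z\<in>verts G. adj G z y}. (\<lambda>p. p @ [y]) ` walks G k x z)"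
proof (intro equalityI subsetI)
  fix p assume p: "p \<in> walks G (Suc k) x y"
  then have len: "length p = Suc (Suc k)" and p0: "p ! 0 = x" and pk: "p ! Suc k = y"
    and ps: "set p \<subseteq> verts G" and pa: "\<forall>i<Suc k. adj G (p ! i) (p ! Suc i)"
    by (auto simp: walks_def)
  define q where "q = butlast p"
  have pq: "p = q @ [y]"
  proof -
    have "p \<noteq> []" using len by auto
    then have "p = butlast p @ [last p]" by simp
    moreover have "last p = p ! Suc k" using len \<open>p \<noteq> []\<close> by (simp add: last_conv_nth)
    ultimately show ?thesis using pk q_def by simp
  qed
  have lq: "length q = Suc k" using len q_def by simp
  have qi: "\<And>i. i < Suc k \<Longrightarrow> q ! i = p ! i" using pq lq by (simp add: nth_append)
  have "q \<in> walks G k x (p ! k)"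
    unfolding walks_def using lq qi p0 ps pa pq by (auto)
  moreover have "p ! k \<in> verts G"
  proof -
    have "p ! k \<in> set p" using len by (intro nth_mem) simp
    then show ?thesis using ps by blast
  qed
  moreover have "adj G (p ! k) y" using pa pk by auto
  ultimately show "p \<in> (\<Union>z\<in>{z\<in>verts G. adj G z y}. (\<lambda>p. p @ [y]) ` walks G k x z)"
    using pq by blast
next
  fix p assume "p \<in> (\<Union>z\<in>{z\<in>verts G. adj G z y}. (\<lambda>p. p @ [y]) ` walks G k x z)"
  then obtain z q where z: "z \<in> verts G" "adj G z y" and q: "q \<in> walks G k x z" and pq: "p = q @ [y]"
    by auto
  from q have lq: "length q = Suc k" and q0: "q ! 0 = x" and qk: "q ! k = z"
    and qs: "set q \<subseteq> verts G" and qa: "\<forall>i<k. adj G (q ! i) (q ! Suc i)"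
    by (auto simp: walks_def)
  have "adj G (p ! i) (p ! Suc i)" if "i < Suc k" for i
  proof (cases "i < k")
    case True then show ?thesis using qa pq lq by (simp add: nth_append)
  next
    case False then have "i = k" using that by simp
    then show ?thesis using pq lq qk z by (simp add: nth_append)
  qed
  then show "p \<in> walks G (Suc k) x y"
    unfolding walks_def using pq lq q0 qs y by (auto simp: nth_append)
qed

lemma num_walks_Suc:
  assumes y: "y \<in> verts G"
  shows "num_walks G (Suc k) x y = (\<Sum>z\<in>{z\<in>verts G. adj G z y}. num_walks G k x z)"
proof -
  have "num_walks G (Suc k) x y = card (\<Union>z\<in>{z\<in>verts G. adj G z y}. (\<lambda>p. p @ [y]) ` walks G k x z)"
    unfolding num_walks_def walks_Suc[OF y] ..
  also have "\<dots> = (\<Sum>z\<in>{z\<in>verts G. adj G z y}. card ((\<lambda>p. p @ [y]) ` walks G k x z))"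
  proof (rule card_UN_disjoint)
    show "finite {z \<in> verts G. adj G z y}" by (simp add: verts_def)
    show "\<forall>i\<in>{z \<in> verts G. adj G z y}. finite ((\<lambda>p. p @ [y]) ` walks G k x i)"
      using finite_walks by blast
    show "\<forall>i\<in>{z \<in> verts G. adj G z y}. \<forall>j\<in>{z \<in> verts G. adj G z y}. i \<noteq> j \<longrightarrow>
      (\<lambda>p. p @ [y]) ` walks G k x i \<inter> (\<lambda>p. p @ [y]) ` walks G k x j = {}"
      by (auto simp: walks_def)
  qed
  also have "\<dots> = (\<Sum>z\<in>{z\<in>verts G. adj G z y}. num_walks G k x z)"
    by (intro sum.cong refl) (simp add: num_walks_def card_image inj_on_def)
  finally show ?thesis .
qed

lemma num_walks_0: "num_walks G 0 x y = (if x = y \<and> x \<in> verts G then 1 else 0)"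
  by (auto simp: num_walks_def walks_0)

lemma adj_pow_walks:
  assumes "is_graph G" "x < fst G" "y < fst G"
  shows "(adj_mat G ^\<^sub>m k) $$ (x,y) = real (num_walks G k x y)"
  using assms(3)
proof (induction k arbitrary: y)
  case 0
  have "dim_row (adj_mat G) = fst G" by (simp add: adj_mat_def)
  then have "(adj_mat G ^\<^sub>m 0) $$ (x,y) = (if x = y then 1 else 0)"
    using 0 assms(2) by simp
  then show ?case using 0 assms(2) by (simp add: num_walks_0 verts_def)
next
  case (Suc k)
  let ?A = "adj_mat G" and ?n = "fst G"
  have "(?A ^\<^sub>m Suc k) $$ (x,y) = (\<Sum>l<?n. (?A ^\<^sub>m k) $$ (x,l) * ?A $$ (l,y))"
    unfolding pow_mat.simps(2)
    by (rule mat_mult_index[OF pow_carrier_mat[OF adj_mat_carrier] adj_mat_carrier assms(2) Suc.prems])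
  also have "\<dots> = (\<Sum>l<?n. (if adj G l y then real (num_walks G k x l) else 0))"
  proof (intro sum.cong refl)
    fix l assume "l \<in> {..<?n}"
    then have l: "l < ?n" by simp
    show "(?A ^\<^sub>m k) $$ (x,l) * ?A $$ (l,y) = (if adj G l y then real (num_walks G k x l) else 0)"
      using Suc.IH[OF l] adj_mat_index[OF l Suc.prems] by simp
  qed
  also have "\<dots> = (\<Sum>l\<in>{z\<in>verts G. adj G z y}. real (num_walks G k x l))"
    by (simp only: sum.inter_filter[symmetric] finite_lessThan verts_def lessThan_atLeast0 finite_atLeastLessThan)
  also have "\<dots> = real (num_walks G (Suc k) x y)"
  proof -
    have "y \<in> verts G" using Suc.prems by (simp add: verts_def)
    then show ?thesis by (simp only: num_walks_Suc of_nat_sum)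
  qed
  finally show ?case .
qed




lemma mset_transfer:
  assumes "image_mset f A = image_mset g B"
    and "\<And>a b. a \<in># A \<Longrightarrow> b \<in># B \<Longrightarrow> f a = g b \<Longrightarrow> F a = F' b"
  shows "image_mset F A = image_mset F' B"
  using assms
proof (induction A arbitrary: B)
  case empty
  then show ?case by simp
next
  case (add a A)
  have "f a \<in># image_mset g B" using add.prems(1)[symmetric] by simp
  then obtain b where b: "b \<in># B" "g b = f a" by auto
  define B0 where "B0 = B - {#b#}"
  have B: "B = add_mset b B0" using b(1) B0_def by simp
  have eq: "image_mset f A = image_mset g B0" using add.prems(1) b unfolding B by simp
  have "image_mset F A = image_mset F' B0"
    by (rule add.IH[OF eq]) (use add.prems(2) B in auto)
  moreover have "F a = F' b" using add.prems(2)[of a b] b B by simp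
  ultimately show ?case unfolding B by simp
qed

lemma msum_transfer:
  assumes "image_mset f A = image_mset g B"
    and "\<And>a b. a \<in># A \<Longrightarrow> b \<in># B \<Longrightarrow> f a = g b \<Longrightarrow> F a = F' b"
  shows "sum_mset (image_mset F A) = sum_mset (image_mset F' B)"
  using mset_transfer[OF assms] by simp

fun base :: "color \<Rightarrow> nat" where
  "base (Init a) = a"
| "base (Refine c M) = base c"

lemma base_cr: "base (cr_color G c r x) = c x"
  by (induction r) auto

lemma nbrs_alt: "is_graph G \<Longrightarrow> nbrs G y = {z\<in>verts G. adj G z y}"
  unfolding nbrs_def is_graph_def by blast

lemma nbrs_sub: "nbrs G y \<subseteq> verts G"
  unfolding nbrs_def by auto

lemma finite_verts[simp]: "finite (verts G)"
  by (simp add: verts_def)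

lemma color_walks:
  assumes G: "is_graph G" and H: "is_graph H" and x: "x \<in> verts G" and x': "x' \<in> verts H"
  shows "y \<in> verts G \<Longrightarrow> y' \<in> verts H \<Longrightarrow>
    cr_color G (individualize x) r y = cr_color H (individualize x') r y' \<Longrightarrow> k \<le> r \<Longrightarrow>
    num_walks G k x y = num_walks H k x' y'"
proof (induction r arbitrary: y y' k)
  case 0
  then have "(y = x) = (y' = x')"
    by (auto simp: individualize_def split: if_splits)
  with 0 x x' show ?case by (auto simp: num_walks_0)
next
  case (Suc r)
  let ?c = "individualize x" and ?c' = "individualize x'"
  from Suc.prems(3) have eq1: "cr_color G ?c r y = cr_color H ?c' r y'"
    and eq2: "image_mset (cr_color G ?c r) (mset_set (nbrs G y)) =
              image_mset (cr_color H ?c' r) (mset_set (nbrs H y'))" by auto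
  show ?case
  proof (cases "k \<le> r")
    case True
    then show ?thesis using Suc.IH[OF Suc.prems(1,2) eq1] by blast
  next
    case False
    then have k: "k = Suc r" using Suc.prems(4) by simp
    have "num_walks G k x y = (\<Sum>z\<in>nbrs G y. num_walks G r x z)"
      using k Suc.prems(1) by (simp add: num_walks_Suc nbrs_alt[OF G])
    also have "\<dots> = sum_mset (image_mset (num_walks G r x) (mset_set (nbrs G y)))"
      by (rule sum_unfold_sum_mset)
    also have "\<dots> = sum_mset (image_mset (num_walks H r x') (mset_set (nbrs H y')))"
    proof (rule msum_transfer[OF eq2])
      fix a b assume "a \<in># mset_set (nbrs G y)" "b \<in># mset_set (nbrs H y')"
        "cr_color G ?c r a = cr_color H ?c' r b"
      moreover have "finite (nbrs G y)" "finite (nbrs H y')"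
        using nbrs_sub finite_verts finite_subset by blast+
      ultimately show "num_walks G r x a = num_walks H r x' b"
        using Suc.IH[of a b r] nbrs_sub[of G y] nbrs_sub[of H y'] by auto
    qed
    also have "\<dots> = (\<Sum>z\<in>nbrs H y'. num_walks H r x' z)"
      by (rule sum_unfold_sum_mset[symmetric])
    also have "\<dots> = num_walks H k x' y'"
      using k Suc.prems(2) by (simp add: num_walks_Suc nbrs_alt[OF H])
    finally show ?thesis .
  qed
qed




definition mpoly :: "'a::comm_ring_1 poly \<Rightarrow> 'a mat \<Rightarrow> 'a mat" where
  "mpoly p A = mat (dim_row A) (dim_row A)
     (\<lambda>(i,j). \<Sum>k<Suc (degree p). coeff p k * (A ^\<^sub>m k) $$ (i,j))"

lemma mpoly_dim[simp]: "dim_row (mpoly p A) = dim_row A" "dim_col (mpoly p A) = dim_row A"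
  by (auto simp: mpoly_def)

lemma mpoly_carrier[simp]: "A \<in> carrier_mat n n \<Longrightarrow> mpoly p A \<in> carrier_mat n n"
  by (auto simp: mpoly_def)

lemma sum_coeff_bound:
  fixes f :: "nat \<Rightarrow> 'a::comm_ring_1"
  assumes "degree p < N"
  shows "(\<Sum>k<N. coeff p k * f k) = (\<Sum>k<Suc (degree p). coeff p k * f k)"
  by (rule sum.mono_neutral_right) (use assms in \<open>auto simp: coeff_eq_0\<close>)

lemma mpoly_index:
  assumes "A \<in> carrier_mat n n" "i < n" "j < n" "degree p < N"
  shows "mpoly p A $$ (i,j) = (\<Sum>k<N. coeff p k * (A ^\<^sub>m k) $$ (i,j))"
  using assms by (simp add: mpoly_def sum_coeff_bound)

lemma mpoly_add:
  assumes A: "A \<in> carrier_mat n n"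
  shows "mpoly (p + q) A = mpoly p A + mpoly q A"
proof (rule eq_matI)
  let ?N = "Suc (degree p + degree q)"
  fix i j assume "i < dim_row (mpoly p A + mpoly q A)" "j < dim_col (mpoly p A + mpoly q A)"
  then have ij: "i < n" "j < n" using A by simp_all
  have d: "degree (p + q) < ?N" "degree p < ?N" "degree q < ?N"
    using degree_add_le_max[of p q] by auto
  have "mpoly (p + q) A $$ (i, j) = (\<Sum>k<?N. coeff (p + q) k * (A ^\<^sub>m k) $$ (i,j))"
    by (rule mpoly_index[OF A ij d(1)])
  also have "\<dots> = (\<Sum>k<?N. coeff p k * (A ^\<^sub>m k) $$ (i,j)) + (\<Sum>k<?N. coeff q k * (A ^\<^sub>m k) $$ (i,j))"
    by (simp add: sum.distrib distrib_right)
  also have "\<dots> = mpoly p A $$ (i,j) + mpoly q A $$ (i,j)"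
    by (simp only: mpoly_index[OF A ij d(2)] mpoly_index[OF A ij d(3)])
  also have "\<dots> = (mpoly p A + mpoly q A) $$ (i, j)"
    using ij A by simp
  finally show "mpoly (p + q) A $$ (i, j) = (mpoly p A + mpoly q A) $$ (i, j)" .
qed (use A in simp_all)

lemma mpoly_smult:
  assumes A: "A \<in> carrier_mat n n"
  shows "mpoly (Polynomial.smult c p) A = c \<cdot>\<^sub>m mpoly p A"
proof (rule eq_matI)
  fix i j assume "i < dim_row (c \<cdot>\<^sub>m mpoly p A)" "j < dim_col (c \<cdot>\<^sub>m mpoly p A)"
  then have ij: "i < n" "j < n" using A by simp_all
  have d: "degree (Polynomial.smult c p) < Suc (degree p)" "degree p < Suc (degree p)"
    using degree_smult_le[of c p] by auto
  have "mpoly (Polynomial.smult c p) A $$ (i, j) = (\<Sum>k<Suc (degree p). coeff (Polynomial.smult c p) k * (A ^\<^sub>m k) $$ (i,j))"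
    by (rule mpoly_index[OF A ij d(1)])
  also have "\<dots> = c * (\<Sum>k<Suc (degree p). coeff p k * (A ^\<^sub>m k) $$ (i,j))"
    by (simp only: coeff_smult sum_distrib_left mult.assoc)
  also have "\<dots> = c * mpoly p A $$ (i,j)"
    by (simp only: mpoly_index[OF A ij d(2)])
  also have "\<dots> = (c \<cdot>\<^sub>m mpoly p A) $$ (i, j)"
    using ij A by simp
  finally show "mpoly (Polynomial.smult c p) A $$ (i, j) = (c \<cdot>\<^sub>m mpoly p A) $$ (i, j)" .
qed (use A in simp_all)

lemma pow_commute:
  assumes A: "A \<in> carrier_mat n n"
  shows "A * A ^\<^sub>m k = A ^\<^sub>m k * A"
proof (induction k)
  case 0 then show ?case using A by simp
next
  case (Suc k)
  have "A * A ^\<^sub>m Suc k = (A * A ^\<^sub>m k) * A"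
    using A by (simp add: assoc_mult_mat[of _ n n _ n _ n])
  also have "\<dots> = A ^\<^sub>m Suc k * A" using Suc by simp
  finally show ?case .
qed

lemma mpoly_shift:
  assumes A: "A \<in> carrier_mat n n"
  shows "mpoly (pCons 0 p) A = A * mpoly p A"
proof (rule eq_matI)
  fix i j assume "i < dim_row (A * mpoly p A)" "j < dim_col (A * mpoly p A)"
  then have ij: "i < n" "j < n" using A by simp_all
  let ?N = "Suc (degree p)"
  have d: "degree (pCons 0 p) < Suc ?N" "degree p < ?N"
    by (auto simp: degree_pCons_le Suc_le_eq intro: le_less_trans[OF degree_pCons_le])
  have "mpoly (pCons 0 p) A $$ (i,j) = (\<Sum>k<Suc ?N. coeff (pCons 0 p) k * (A ^\<^sub>m k) $$ (i,j))"
    by (rule mpoly_index[OF A ij d(1)])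
  also have "\<dots> = (\<Sum>k<?N. coeff p k * (A ^\<^sub>m Suc k) $$ (i,j))"
    by (subst sum.lessThan_Suc_shift) simp
  also have "\<dots> = (\<Sum>k<?N. coeff p k * (\<Sum>l<n. A $$ (i,l) * (A ^\<^sub>m k) $$ (l,j)))"
  proof (intro sum.cong refl)
    fix k
    have "A ^\<^sub>m Suc k = A * A ^\<^sub>m k" using pow_commute[OF A, of k] by simp
    then show "coeff p k * (A ^\<^sub>m Suc k) $$ (i,j) = coeff p k * (\<Sum>l<n. A $$ (i,l) * (A ^\<^sub>m k) $$ (l,j))"
      using mat_mult_index[OF A pow_carrier_mat[OF A] ij] by simp
  qed
  also have "\<dots> = (\<Sum>l<n. A $$ (i,l) * (\<Sum>k<?N. coeff p k * (A ^\<^sub>m k) $$ (l,j)))"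
    by (simp add: sum_distrib_left sum_distrib_right algebra_simps sum.swap[of _ "{..<n}"])
  also have "\<dots> = (\<Sum>l<n. A $$ (i,l) * mpoly p A $$ (l,j))"
    using ij by (intro sum.cong refl) (simp add: mpoly_index[OF A _ _ d(2)])
  also have "\<dots> = (A * mpoly p A) $$ (i,j)"
    using mat_mult_index[OF A mpoly_carrier[OF A] ij] by simp
  finally show "mpoly (pCons 0 p) A $$ (i, j) = (A * mpoly p A) $$ (i, j)" .
qed (use A in simp_all)

lemma mpoly_monom:
  assumes A: "A \<in> carrier_mat n n"
  shows "mpoly (monom 1 k) A = A ^\<^sub>m k"
proof (rule eq_matI)
  fix i j assume "i < dim_row (A ^\<^sub>m k)" "j < dim_col (A ^\<^sub>m k)"
  then have ij: "i < n" "j < n" using A by (simp_all add: carrier_matD split: if_splits)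
  have d: "degree (monom (1::'a) k) < Suc k" by (simp add: degree_monom_eq)
  show "mpoly (monom 1 k) A $$ (i, j) = (A ^\<^sub>m k) $$ (i, j)"
    using ij by (simp add: mpoly_index[OF A _ _ d] coeff_monom if_distrib sum.delta' cong: if_cong)
qed (use A in simp_all)

lemma mpoly_one:
  assumes A: "A \<in> carrier_mat n n"
  shows "mpoly 1 A = 1\<^sub>m n"
  using mpoly_monom[OF A, of 0] A by (simp add: monom_0 one_pCons)

lemma transpose_pow:
  fixes A :: "'a::comm_ring_1 mat"
  assumes A: "A \<in> carrier_mat n n"
  shows "transpose_mat (A ^\<^sub>m k) = transpose_mat A ^\<^sub>m k"
proof (induction k)
  case 0 then show ?case using A by simp
next
  case (Suc k)
  have "transpose_mat (A ^\<^sub>m Suc k) = transpose_mat A * transpose_mat (A ^\<^sub>m k)"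
    unfolding pow_mat.simps(2) by (rule transpose_mult[OF pow_carrier_mat[OF A] A])
  also have "\<dots> = transpose_mat A * transpose_mat A ^\<^sub>m k" using Suc by simp
  also have "\<dots> = transpose_mat A ^\<^sub>m Suc k"
    using pow_commute[of "transpose_mat A" n k] A by simp
  finally show ?case .
qed

lemma mpoly_symmetric:
  assumes A: "A \<in> carrier_mat n n" and sym: "transpose_mat A = A"
    and ij: "i < n" "j < n"
  shows "mpoly p A $$ (i,j) = mpoly p A $$ (j,i)"
proof -
  have "(A ^\<^sub>m k) $$ (i,j) = (A ^\<^sub>m k) $$ (j,i)" for k
  proof -
    have "(A ^\<^sub>m k) $$ (j,i) = transpose_mat (A ^\<^sub>m k) $$ (i,j)"
      using ij A by simp
    also have "\<dots> = (A ^\<^sub>m k) $$ (i,j)" using transpose_pow[OF A, of k] sym by simp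
    finally show ?thesis by simp
  qed
  then show ?thesis using ij A by (simp add: mpoly_def)
qed

lemma mpoly_eigen:
  assumes A: "A \<in> carrier_mat n n" and v: "v \<in> carrier_vec n" and ev: "A *\<^sub>v v = \<mu> \<cdot>\<^sub>v v"
  shows "mpoly p A *\<^sub>v v = poly p \<mu> \<cdot>\<^sub>v v"
proof (rule eq_vecI)
  fix i assume "i < dim_vec (poly p \<mu> \<cdot>\<^sub>v v)"
  then have i: "i < n" using v by auto
  have pw: "(A ^\<^sub>m k) *\<^sub>v v = \<mu> ^ k \<cdot>\<^sub>v v" for k
  proof (cases "v = 0\<^sub>v n")
    case True then show ?thesis using A by (intro eq_vecI) (auto simp: mat_vec_index[OF pow_carrier_mat[OF A]])
  next
    case False
    then have "eigenvector A v \<mu>" using A v ev by (auto simp: eigenvector_def)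
    then show ?thesis by (rule eigenvector_pow[OF A])
  qed
  have "(mpoly p A *\<^sub>v v) $ i = (\<Sum>j<n. mpoly p A $$ (i,j) * v $ j)"
    by (rule mat_vec_index[OF mpoly_carrier[OF A] v i])
  also have "\<dots> = (\<Sum>j<n. (\<Sum>k<Suc (degree p). coeff p k * (A ^\<^sub>m k) $$ (i,j)) * v $ j)"
    using i A by (intro sum.cong refl) (simp add: mpoly_def)
  also have "\<dots> = (\<Sum>k<Suc (degree p). coeff p k * (\<Sum>j<n. (A ^\<^sub>m k) $$ (i,j) * v $ j))"
    by (simp add: sum_distrib_left sum_distrib_right algebra_simps sum.swap[of _ "{..<n}"])
  also have "\<dots> = (\<Sum>k<Suc (degree p). coeff p k * (\<mu> ^ k * v $ i))"
  proof (intro sum.cong refl)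
    fix k
    have "(\<Sum>j<n. (A ^\<^sub>m k) $$ (i,j) * v $ j) = ((A ^\<^sub>m k) *\<^sub>v v) $ i"
      by (rule mat_vec_index[OF pow_carrier_mat[OF A] v i, symmetric])
    also have "\<dots> = \<mu> ^ k * v $ i" using pw[of k] i v by simp
    finally show "coeff p k * (\<Sum>j<n. (A ^\<^sub>m k) $$ (i,j) * v $ j) = coeff p k * (\<mu> ^ k * v $ i)" by simp
  qed
  also have "\<dots> = poly p \<mu> * v $ i"
    by (simp add: poly_altdef sum_distrib_left mult_ac lessThan_Suc_atMost)
  also have "\<dots> = (poly p \<mu> \<cdot>\<^sub>v v) $ i" using i v by simp
  finally show "(mpoly p A *\<^sub>v v) $ i = (poly p \<mu> \<cdot>\<^sub>v v) $ i" .
qed (use A v in auto)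




interpretation of_real_poly_hom: map_poly_inj_idom_hom "of_real :: real \<Rightarrow> complex" ..

definition mtrace :: "'a::comm_ring_1 mat \<Rightarrow> 'a" where
  "mtrace M = (\<Sum>i<dim_row M. M $$ (i,i))"

lemma mtrace_comm:
  fixes A :: "'a::comm_ring_1 mat"
  assumes A: "A \<in> carrier_mat n m" and B: "B \<in> carrier_mat m n"
  shows "mtrace (A * B) = mtrace (B * A)"
proof -
  have "mtrace (A * B) = (\<Sum>i<n. (A * B) $$ (i,i))"
    unfolding mtrace_def using A by simp
  also have "\<dots> = (\<Sum>i<n. \<Sum>l<m. A $$ (i,l) * B $$ (l,i))"
    by (intro sum.cong refl, rule mat_mult_index[OF A B]) auto
  also have "\<dots> = (\<Sum>l<m. \<Sum>i<n. B $$ (l,i) * A $$ (i,l))"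
    by (subst sum.swap) (simp add: mult.commute)
  also have "\<dots> = (\<Sum>l<m. (B * A) $$ (l,l))"
    by (intro sum.cong refl, rule mat_mult_index[OF B A, symmetric]) auto
  also have "\<dots> = mtrace (B * A)"
    unfolding mtrace_def using B by simp
  finally show ?thesis .
qed

lemma mtrace_sim:
  fixes B :: "'a::comm_ring_1 mat"
  assumes P: "P \<in> carrier_mat n n" and B: "B \<in> carrier_mat n n" and Q: "Q \<in> carrier_mat n n"
    and QP: "Q * P = 1\<^sub>m n"
  shows "mtrace (P * B * Q) = mtrace B"
proof -
  have "mtrace (P * B * Q) = mtrace (Q * (P * B))"
    by (rule mtrace_comm[of _ n n]) (use P B Q in auto)
  also have "Q * (P * B) = (Q * P) * B" using P B Q by (simp add: assoc_mult_mat[of _ n n _ n _ n])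
  also have "\<dots> = B" using QP B by simp
  finally show ?thesis .
qed

lemma ut_mult:
  fixes B :: "'a::comm_ring_1 mat"
  assumes B: "B \<in> carrier_mat n n" and C: "C \<in> carrier_mat n n"
    and uB: "upper_triangular B" and uC: "upper_triangular C"
  shows "upper_triangular (B * C)" "\<And>i. i < n \<Longrightarrow> (B * C) $$ (i,i) = B $$ (i,i) * C $$ (i,i)"
proof -
  show "upper_triangular (B * C)"
  proof (rule upper_triangularI)
    fix i j assume ji: "j < i" and i: "i < dim_row (B * C)"
    then have i: "i < n" using B by simp
    have "(B * C) $$ (i,j) = (\<Sum>l<n. B $$ (i,l) * C $$ (l,j))"
      using mat_mult_index[OF B C i] ji i by simp
    also have "\<dots> = 0"
    proof (rule sum.neutral, intro ballI)
      fix l assume "l \<in> {..<n}"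
      then have l: "l < n" by simp
      show "B $$ (i,l) * C $$ (l,j) = 0"
      proof (cases "l < i")
        case True then show ?thesis using uB i B by (auto dest: upper_triangularD)
      next
        case False then have "j < l" using ji by simp
        then show ?thesis using uC l C by (auto dest: upper_triangularD)
      qed
    qed
    finally show "(B * C) $$ (i,j) = 0" .
  qed
next
  fix i assume i: "i < n"
  have "(B * C) $$ (i,i) = (\<Sum>l<n. B $$ (i,l) * C $$ (l,i))"
    using mat_mult_index[OF B C i i] by simp
  also have "\<dots> = B $$ (i,i) * C $$ (i,i)"
  proof -
    have "(\<Sum>l<n. B $$ (i,l) * C $$ (l,i)) = B $$ (i,i) * C $$ (i,i) + (\<Sum>l\<in>{..<n}-{i}. B $$ (i,l) * C $$ (l,i))"
      using i by (subst sum.remove[of _ i]) auto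
    also have "(\<Sum>l\<in>{..<n}-{i}. B $$ (i,l) * C $$ (l,i)) = 0"
    proof (rule sum.neutral, intro ballI)
      fix l assume "l \<in> {..<n}-{i}"
      then have l: "l < n" "l \<noteq> i" by auto
      show "B $$ (i,l) * C $$ (l,i) = 0"
      proof (cases "l < i")
        case True then show ?thesis using uB i B by (auto dest: upper_triangularD)
      next
        case False then have "i < l" using l by simp
        then show ?thesis using uC l C by (auto dest: upper_triangularD)
      qed
    qed
    finally show ?thesis by simp
  qed
  finally show "(B * C) $$ (i,i) = B $$ (i,i) * C $$ (i,i)" .
qed

lemma ut_pow:
  fixes B :: "'a::comm_ring_1 mat"
  assumes B: "B \<in> carrier_mat n n" and uB: "upper_triangular B"
  shows "upper_triangular (B ^\<^sub>m k) \<and> (\<forall>i<n. (B ^\<^sub>m k) $$ (i,i) = (B $$ (i,i)) ^ k)"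
proof (induction k)
  case 0
  then show ?case using B by auto
next
  case (Suc k)
  then show ?case
    using ut_mult[OF pow_carrier_mat[OF B] B _ uB, of k] by simp
qed

lemma proots_lin_prod: "proots (\<Prod>a\<leftarrow>rs. [:- a, 1:]) = mset (rs :: 'a::idom list)"
proof (induction rs)
  case Nil then show ?case by simp
next
  case (Cons r rs)
  have nz: "(\<Prod>a\<leftarrow>rs. [:- a, 1:]) \<noteq> (0 :: 'a poly)"
  proof -
    have "0 \<notin> (\<lambda>a. [:- a, 1:]) ` set rs" by auto
    then show ?thesis by (simp add: prod_list_zero_iff)
  qed
  have "proots (\<Prod>a\<leftarrow>r # rs. [:- a, 1:]) = proots ([:- r, 1:] * (\<Prod>a\<leftarrow>rs. [:- a, 1:]))"
    by simp
  also have "\<dots> = proots [:- r, 1:] + proots (\<Prod>a\<leftarrow>rs. [:- a, 1:])"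
    by (rule proots_mult) (use nz in auto)
  also have "\<dots> = {#r#} + mset rs" by (simp only: proots_linear_factor Cons.IH minus_minus)
  finally show ?case by simp
qed

lemma adj_sym: "is_graph G \<Longrightarrow> adj G i j = adj G j i"
  unfolding is_graph_def by blast

lemma eig_real:
  assumes G: "is_graph G" and e: "poly (char_poly (map_mat complex_of_real (adj_mat G))) e = 0"
  shows "e \<in> \<real>"
proof -
  let ?n = "fst G" and ?A = "adj_mat G"
  let ?AC = "map_mat complex_of_real ?A"
  have AC: "?AC \<in> carrier_mat ?n ?n" by (simp add: adj_mat_def)
  have "eigenvalue ?AC e" using eigenvalue_root_char_poly[OF AC] e by simp
  then obtain v where "eigenvector ?AC v e" unfolding eigenvalue_def by blast
  then have v: "v \<in> carrier_vec ?n" and v0: "v \<noteq> 0\<^sub>v ?n" and ev: "?AC *\<^sub>v v = e \<cdot>\<^sub>v v"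
    unfolding eigenvector_def by (auto simp: adj_mat_def)
  have ACi: "(?AC *\<^sub>v v) $ i = (\<Sum>j<?n. complex_of_real (?A $$ (i,j)) * v $ j)" if "i < ?n" for i
    using mat_vec_index[OF AC v that] that by (simp add: adj_mat_def)
  have symA: "?A $$ (i,j) = ?A $$ (j,i)" if "i < ?n" "j < ?n" for i j
    using that adj_sym[OF G] by (simp add: adj_mat_index)
  define S where "S = (\<Sum>i<?n. v $ i * cnj (v $ i))"
  have L1: "(\<Sum>i<?n. (?AC *\<^sub>v v) $ i * cnj (v $ i)) = e * S"
    unfolding S_def sum_distrib_left using ev v by (intro sum.cong refl) auto
  have L2: "(\<Sum>i<?n. v $ i * cnj ((?AC *\<^sub>v v) $ i)) = cnj e * S"
    unfolding S_def sum_distrib_left using ev v by (intro sum.cong refl) auto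
  have "(\<Sum>i<?n. (?AC *\<^sub>v v) $ i * cnj (v $ i))
      = (\<Sum>i<?n. \<Sum>j<?n. complex_of_real (?A $$ (i,j)) * v $ j * cnj (v $ i))"
    by (intro sum.cong refl) (simp add: ACi sum_distrib_right)
  also have "\<dots> = (\<Sum>j<?n. \<Sum>i<?n. complex_of_real (?A $$ (i,j)) * v $ j * cnj (v $ i))"
    by (rule sum.swap)
  also have "\<dots> = (\<Sum>j<?n. \<Sum>i<?n. v $ j * cnj (complex_of_real (?A $$ (j,i)) * v $ i))"
    by (intro sum.cong refl) (simp add: symA mult_ac)
  also have "\<dots> = (\<Sum>i<?n. v $ i * cnj ((?AC *\<^sub>v v) $ i))"
    by (intro sum.cong refl) (simp add: ACi sum_distrib_left cnj_sum)
  finally have eq: "e * S = cnj e * S" using L1 L2 by simp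
  have "S \<noteq> 0"
  proof
    assume S0: "S = 0"
    have "S = (\<Sum>i<?n. complex_of_real ((Re (v $ i))\<^sup>2 + (Im (v $ i))\<^sup>2))"
      unfolding S_def by (simp only: complex_mult_cnj)
    also have "\<dots> = complex_of_real (\<Sum>i<?n. (Re (v $ i))\<^sup>2 + (Im (v $ i))\<^sup>2)"
      by (simp only: of_real_sum)
    finally have "S = complex_of_real (\<Sum>i<?n. (Re (v $ i))\<^sup>2 + (Im (v $ i))\<^sup>2)" .
    then have "(\<Sum>i<?n. (Re (v $ i))\<^sup>2 + (Im (v $ i))\<^sup>2) = 0" using S0 by (metis of_real_eq_0_iff)
    then have "\<forall>i\<in>{..<?n}. (Re (v $ i))\<^sup>2 + (Im (v $ i))\<^sup>2 = 0"
      by (subst (asm) sum_nonneg_eq_0_iff) auto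
    then have "\<forall>i<?n. v $ i = 0"
      by (auto simp: complex_eq_iff add_nonneg_eq_0_iff)
    then have "v = 0\<^sub>v ?n" using v by (intro eq_vecI) auto
    then show False using v0 by simp
  qed
  then have "cnj e = e" using eq by simp
  then show ?thesis by (simp add: Reals_cnj_iff)
qed




lemma spec_facts:
  assumes G: "is_graph G"
  shows "size (Spec G) = fst G \<and> (\<forall>k. mtrace (adj_mat G ^\<^sub>m k) = (\<Sum>t\<in>#Spec G. t ^ k))"
proof -
  let ?n = "fst G" and ?A = "adj_mat G"
  let ?AC = "map_mat complex_of_real ?A"
  have A: "?A \<in> carrier_mat ?n ?n" by (simp add: adj_mat_def)
  have AC: "?AC \<in> carrier_mat ?n ?n" by (simp add: adj_mat_def)
  obtain es where es: "char_poly ?AC = (\<Prod>a\<leftarrow>es. [:- a, 1:])" and len: "length es = ?n"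
    using char_poly_factorized[OF AC] by blast
  have real: "e \<in> \<real>" if "e \<in> set es" for e
  proof (rule eig_real[OF G])
    show "poly (char_poly ?AC) e = 0" unfolding es using that
      by (simp add: poly_prod_list prod_list_zero_iff)
  qed
  define rs where "rs = map Re es"
  have es_rs: "es = map complex_of_real rs"
    unfolding rs_def by (rule nth_equalityI) (auto simp: real of_real_Re)
  have "map_poly complex_of_real (char_poly ?A) = char_poly ?AC"
    by (rule of_real_hom.char_poly_hom[OF A, symmetric])
  also have "\<dots> = (\<Prod>a\<leftarrow>rs. map_poly complex_of_real [:- a, 1:])"
    unfolding es es_rs by (simp add: o_def)
  also have "\<dots> = map_poly complex_of_real (\<Prod>a\<leftarrow>rs. [:- a, 1:])"
    by (simp add: of_real_poly_hom.hom_prod_list o_def)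
  finally have cpA: "char_poly ?A = (\<Prod>a\<leftarrow>rs. [:- a, 1:])"
    by (rule of_real_poly_hom.injectivity)
  have Spec: "Spec G = mset rs" unfolding Spec_def cpA by (rule proots_lin_prod)
  obtain B P Q where BPQ: "schur_decomposition ?AC es = (B,P,Q)" by (cases "schur_decomposition ?AC es") auto
  from schur_decomposition[OF AC es BPQ]
  have sim: "similar_mat_wit ?AC B P Q" and uB: "upper_triangular B" and dB: "diag_mat B = es" by auto
  from sim AC have B: "B \<in> carrier_mat ?n ?n" and P: "P \<in> carrier_mat ?n ?n" and Q: "Q \<in> carrier_mat ?n ?n"
    and QP: "Q * P = 1\<^sub>m ?n"
    using similar_mat_witD2[OF AC sim] by auto
  have Bii: "B $$ (i,i) = es ! i" if "i < ?n" for i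
  proof -
    have "diag_mat B ! i = B $$ (i,i)" using that B by (simp add: diag_mat_def)
    then show ?thesis using dB by simp
  qed
  have tr: "mtrace (?A ^\<^sub>m k) = (\<Sum>t\<in>#Spec G. t ^ k)" for k
  proof -
    have "complex_of_real (mtrace (?A ^\<^sub>m k)) = mtrace (?AC ^\<^sub>m k)"
      unfolding of_real_hom.mat_hom_pow[OF A, symmetric] mtrace_def using A by (simp add: of_real_sum)
    also have "?AC ^\<^sub>m k = P * B ^\<^sub>m k * Q" by (rule similar_mat_wit_pow_id[OF sim])
    also have "mtrace \<dots> = mtrace (B ^\<^sub>m k)" by (rule mtrace_sim[OF P _ Q QP]) (use B in simp)
    also have "\<dots> = (\<Sum>i<?n. (es ! i) ^ k)"
      unfolding mtrace_def using ut_pow[OF B uB, of k] B Bii by (intro sum.cong) auto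
    also have "\<dots> = complex_of_real (\<Sum>i<?n. (rs ! i) ^ k)"
      using len by (simp add: es_rs of_real_sum)
    finally have "mtrace (?A ^\<^sub>m k) = (\<Sum>i<?n. (rs ! i) ^ k)" by (simp only: of_real_eq_iff)
    also have "\<dots> = sum_list (map (\<lambda>t. t ^ k) rs)"
      using len by (simp add: rs_def sum_list_sum_nth atLeast0LessThan)
    also have "\<dots> = (\<Sum>t\<in>#Spec G. t ^ k)" unfolding Spec by (simp only: mset_map[symmetric] sum_mset_sum_list)
    finally show ?thesis .
  qed
  show ?thesis using tr Spec len by (simp add: rs_def)
qed




definition qq :: "real list \<Rightarrow> real poly" where
  "qq ms = (\<Prod>\<nu>\<leftarrow>ms. [:- \<nu>, 1:])"

lemma pow_add_mat:
  assumes A: "A \<in> carrier_mat n n"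
  shows "A ^\<^sub>m (k + l) = A ^\<^sub>m k * A ^\<^sub>m l"
proof (induction l)
  case 0 then show ?case using A by simp
next
  case (Suc l)
  have "A ^\<^sub>m (k + Suc l) = A ^\<^sub>m (k + l) * A" by simp
  also have "\<dots> = A ^\<^sub>m k * A ^\<^sub>m l * A" using Suc by simp
  also have "\<dots> = A ^\<^sub>m k * (A ^\<^sub>m l * A)"
    by (rule assoc_mult_mat[of _ n n _ n _ n]) (use A in auto)
  finally show ?case by simp
qed

lemma adj_mat_sym:
  assumes G: "is_graph G" and ij: "i < fst G" "j < fst G"
  shows "adj_mat G $$ (i,j) = adj_mat G $$ (j,i)"
  using ij adj_sym[OF G] by (simp add: adj_mat_index)

lemma adj_mat_transpose:
  assumes G: "is_graph G"
  shows "transpose_mat (adj_mat G) = adj_mat G"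
  by (rule eq_matI) (auto simp: adj_mat_def adj_sym[OF G])

lemma distinct_eigs_set: "set (distinct_eigs G) = set_mset (Spec G)"
  unfolding distinct_eigs_def by simp

lemma sum_swap3:
  "(\<Sum>j\<in>J. \<Sum>k\<in>K. \<Sum>l\<in>L. f j k l) = (\<Sum>k\<in>K. \<Sum>l\<in>L. \<Sum>j\<in>J. (f j k l :: 'a::comm_monoid_add))"
proof -
  have "(\<Sum>j\<in>J. \<Sum>k\<in>K. \<Sum>l\<in>L. f j k l) = (\<Sum>k\<in>K. \<Sum>j\<in>J. \<Sum>l\<in>L. f j k l)"
    by (rule sum.swap)
  also have "\<dots> = (\<Sum>k\<in>K. \<Sum>l\<in>L. \<Sum>j\<in>J. f j k l)"
    by (rule sum.cong[OF refl], rule sum.swap)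
  finally show ?thesis .
qed

lemma sum_swap4:
  "(\<Sum>i\<in>I. \<Sum>j\<in>J. \<Sum>k\<in>K. \<Sum>l\<in>L. f i j k l) = (\<Sum>k\<in>K. \<Sum>l\<in>L. \<Sum>i\<in>I. \<Sum>j\<in>J. (f i j k l :: 'a::comm_monoid_add))"
proof -
  have "(\<Sum>i\<in>I. \<Sum>j\<in>J. \<Sum>k\<in>K. \<Sum>l\<in>L. f i j k l) = (\<Sum>i\<in>I. \<Sum>k\<in>K. \<Sum>l\<in>L. \<Sum>j\<in>J. f i j k l)"
    by (rule sum.cong[OF refl], rule sum_swap3)
  also have "\<dots> = (\<Sum>k\<in>K. \<Sum>l\<in>L. \<Sum>i\<in>I. \<Sum>j\<in>J. f i j k l)"
    by (rule sum_swap3)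
  finally show ?thesis .
qed

lemma F1:
  assumes G: "is_graph G"
  shows "mpoly (qq (distinct_eigs G)) (adj_mat G) = 0\<^sub>m (fst G) (fst G)"
proof -
  let ?n = "fst G" and ?A = "adj_mat G"
  define q where "q = qq (distinct_eigs G)"
  define M where "M = mpoly q ?A"
  define D where "D = Suc (degree q)"
  have A: "?A \<in> carrier_mat ?n ?n" by (rule adj_mat_carrier)
  have M: "M \<in> carrier_mat ?n ?n" unfolding M_def using A by simp
  have Mij: "M $$ (i,j) = (\<Sum>k<D. coeff q k * (?A ^\<^sub>m k) $$ (i,j))" if "i < ?n" "j < ?n" for i j
    unfolding M_def D_def by (rule mpoly_index[OF A that]) simp
  have Msym: "M $$ (i,j) = M $$ (j,i)" if "i < ?n" "j < ?n" for i j
    unfolding M_def by (rule mpoly_symmetric[OF A adj_mat_transpose[OF G] that])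
  obtain rs where rs: "mset rs = Spec G" using ex_mset by blast
  have root: "poly q t = 0" if "t \<in> set rs" for t
  proof -
    have "t \<in># Spec G" unfolding rs[symmetric] using that by simp
    then have "t \<in> set (distinct_eigs G)" by (simp only: distinct_eigs_set)
    then show ?thesis unfolding q_def qq_def
      by (simp add: poly_prod_list prod_list_zero_iff)
  qed
  have trk: "mtrace (?A ^\<^sub>m m) = (\<Sum>r<length rs. (rs ! r) ^ m)" for m
  proof -
    have "mtrace (?A ^\<^sub>m m) = (\<Sum>t\<in>#Spec G. t ^ m)" using spec_facts[OF G] by blast
    also have "\<dots> = sum_list (map (\<lambda>t. t ^ m) rs)"
      unfolding rs[symmetric] by (simp only: mset_map[symmetric] sum_mset_sum_list)
    also have "\<dots> = (\<Sum>r<length rs. (rs ! r) ^ m)"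
      by (simp add: sum_list_sum_nth atLeast0LessThan)
    finally show ?thesis .
  qed
  have trAkl: "(\<Sum>i<?n. \<Sum>j<?n. (?A ^\<^sub>m k) $$ (i,j) * (?A ^\<^sub>m l) $$ (j,i)) = mtrace (?A ^\<^sub>m (k + l))" for k l
  proof -
    have "mtrace (?A ^\<^sub>m (k + l)) = (\<Sum>i<?n. (?A ^\<^sub>m k * ?A ^\<^sub>m l) $$ (i,i))"
      unfolding mtrace_def pow_add_mat[OF A] using A by simp
    also have "\<dots> = (\<Sum>i<?n. \<Sum>j<?n. (?A ^\<^sub>m k) $$ (i,j) * (?A ^\<^sub>m l) $$ (j,i))"
      by (intro sum.cong refl, rule mat_mult_index) (use A in auto)
    finally show ?thesis by simp
  qed
  let ?X = "\<lambda>k i j. (?A ^\<^sub>m k) $$ (i,j)"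
  let ?c = "coeff q"
  have "(\<Sum>i<?n. \<Sum>j<?n. M $$ (i,j) * M $$ (j,i))
      = (\<Sum>i<?n. \<Sum>j<?n. \<Sum>k<D. \<Sum>l<D. ?c k * ?X k i j * (?c l * ?X l j i))"
    by (intro sum.cong refl) (simp add: Mij sum_product)
  also have "\<dots> = (\<Sum>k<D. \<Sum>l<D. \<Sum>i<?n. \<Sum>j<?n. ?c k * ?X k i j * (?c l * ?X l j i))"
    by (rule sum_swap4)
  also have "\<dots> = (\<Sum>k<D. \<Sum>l<D. ?c k * ?c l * (\<Sum>i<?n. \<Sum>j<?n. ?X k i j * ?X l j i))"
    by (intro sum.cong refl) (simp add: sum_distrib_left mult_ac)
  also have "\<dots> = (\<Sum>k<D. \<Sum>l<D. ?c k * ?c l * (\<Sum>r<length rs. (rs ! r) ^ k * (rs ! r) ^ l))"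
    by (intro sum.cong refl) (simp only: trAkl trk power_add)
  also have "\<dots> = (\<Sum>k<D. \<Sum>l<D. \<Sum>r<length rs. ?c k * (rs ! r) ^ k * (?c l * (rs ! r) ^ l))"
    by (intro sum.cong refl) (simp add: sum_distrib_left mult_ac)
  also have "\<dots> = (\<Sum>r<length rs. \<Sum>k<D. \<Sum>l<D. ?c k * (rs ! r) ^ k * (?c l * (rs ! r) ^ l))"
    by (rule sum_swap3[symmetric])
  also have "\<dots> = (\<Sum>r<length rs. (\<Sum>k<D. ?c k * (rs ! r) ^ k) * (\<Sum>l<D. ?c l * (rs ! r) ^ l))"
    by (simp only: sum_product)
  also have "\<dots> = (\<Sum>r<length rs. poly q (rs ! r) * poly q (rs ! r))"
    by (simp only: poly_altdef D_def lessThan_Suc_atMost)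
  also have "\<dots> = 0" using root by simp
  finally have tr0: "(\<Sum>i<?n. \<Sum>j<?n. M $$ (i,j) * M $$ (j,i)) = 0" .
  have tr0': "(\<Sum>i<?n. \<Sum>j<?n. M $$ (i,j) * M $$ (i,j)) = 0"
    using tr0 Msym by (metis (no_types, lifting) lessThan_iff sum.cong)
  have nn: "\<And>i. i \<in> {..<?n} \<Longrightarrow> 0 \<le> (\<Sum>j<?n. M $$ (i,j) * M $$ (i,j))"
    by (intro sum_nonneg) simp
  have "\<forall>i\<in>{..<?n}. (\<Sum>j<?n. M $$ (i,j) * M $$ (i,j)) = 0"
    using sum_nonneg_eq_0_iff[of "{..<?n}" "\<lambda>i. \<Sum>j<?n. M $$ (i,j) * M $$ (i,j)"] nn tr0' by blast
  then have "\<forall>i<?n. \<forall>j<?n. M $$ (i,j) * M $$ (i,j) = 0"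
    by (simp add: sum_nonneg_eq_0_iff)
  then have "M = 0\<^sub>m ?n ?n" using M by (intro eq_matI) auto
  then show ?thesis unfolding M_def q_def .
qed




definition Lag :: "real list \<Rightarrow> real \<Rightarrow> real poly" where
  "Lag ms m = Polynomial.smult (1 / (\<Prod>\<nu>\<leftarrow>filter (\<lambda>\<nu>. \<nu> \<noteq> m) ms. (m - \<nu>)))
      (\<Prod>\<nu>\<leftarrow>filter (\<lambda>\<nu>. \<nu> \<noteq> m) ms. [:- \<nu>, 1:])"

lemma prod_remove:
  fixes f :: "'b \<Rightarrow> 'a::comm_monoid_mult"
  assumes "distinct xs" "x \<in> set xs"
  shows "(\<Prod>y\<leftarrow>xs. f y) = f x * (\<Prod>y\<leftarrow>filter (\<lambda>y. y \<noteq> x) xs. f y)"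
  using assms
proof (induction xs)
  case Nil then show ?case by simp
next
  case (Cons a xs)
  show ?case
  proof (cases "a = x")
    case True
    then have "filter (\<lambda>y. y \<noteq> x) xs = xs" using Cons.prems by (auto simp: filter_id_conv)
    then show ?thesis using True by simp
  next
    case False
    then have "x \<in> set xs" using Cons.prems by simp
    then show ?thesis using Cons False by (simp add: mult_ac)
  qed
qed

lemma Lag_mult:
  assumes "distinct ms" "m \<in> set ms"
  shows "[:- m, 1:] * Lag ms m =
    Polynomial.smult (1 / (\<Prod>\<nu>\<leftarrow>filter (\<lambda>\<nu>. \<nu> \<noteq> m) ms. (m - \<nu>))) (qq ms)"
  unfolding Lag_def qq_def prod_remove[OF assms, of "\<lambda>\<nu>. [:- \<nu>, 1:]"] by (simp add: mult_ac)

lemma Lag_at: "poly (Lag ms m) m = 1"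
proof -
  have nz: "(\<Prod>\<nu>\<leftarrow>filter (\<lambda>\<nu>. \<nu> \<noteq> m) ms. (m - \<nu>)) \<noteq> 0"
    by (auto simp: prod_list_zero_iff)
  have "poly (\<Prod>\<nu>\<leftarrow>filter (\<lambda>\<nu>. \<nu> \<noteq> m) ms. [:- \<nu>, 1:]) m = (\<Prod>\<nu>\<leftarrow>filter (\<lambda>\<nu>. \<nu> \<noteq> m) ms. (m - \<nu>))"
    by (simp add: poly_prod_list o_def)
  then show ?thesis unfolding Lag_def using nz by simp
qed

lemma Lag_other:
  assumes "m' \<in> set ms" "m' \<noteq> m"
  shows "poly (Lag ms m) m' = 0"
proof -
  have "poly (\<Prod>\<nu>\<leftarrow>filter (\<lambda>\<nu>. \<nu> \<noteq> m) ms. [:- \<nu>, 1:]) m' = (\<Prod>\<nu>\<leftarrow>filter (\<lambda>\<nu>. \<nu> \<noteq> m) ms. (m' - \<nu>))"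
    by (simp add: poly_prod_list o_def)
  also have "\<dots> = 0" using assms by (simp add: prod_list_zero_iff)
  finally show ?thesis unfolding Lag_def by simp
qed

lemma Lag_degree: "degree (Lag ms m) \<le> length ms"
proof -
  have "degree (Lag ms m) \<le> degree (\<Prod>\<nu>\<leftarrow>filter (\<lambda>\<nu>. \<nu> \<noteq> m) ms. [:- \<nu>, 1:])"
    unfolding Lag_def by (rule degree_smult_le)
  also have "\<dots> = length (filter (\<lambda>\<nu>. \<nu> \<noteq> m) ms)" by (rule degree_linear_factors)
  also have "\<dots> \<le> length ms" by simp
  finally show ?thesis .
qed

lemma sp_index: "v \<in> carrier_vec n \<Longrightarrow> w \<in> carrier_vec n \<Longrightarrow> v \<bullet> w = (\<Sum>i<n. v $ i * w $ i)"
  by (simp add: scalar_prod_def lessThan_atLeast0)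

lemma sym_sp:
  fixes M :: "real mat"
  assumes M: "M \<in> carrier_mat n n" and sym: "\<And>i j. i < n \<Longrightarrow> j < n \<Longrightarrow> M $$ (i,j) = M $$ (j,i)"
    and v: "v \<in> carrier_vec n" and w: "w \<in> carrier_vec n"
  shows "(M *\<^sub>v v) \<bullet> w = v \<bullet> (M *\<^sub>v w)"
proof -
  have "(M *\<^sub>v v) \<bullet> w = (\<Sum>i<n. (\<Sum>j<n. M $$ (i,j) * v $ j) * w $ i)"
    using M v w by (simp add: sp_index[of _ n] mat_vec_index[OF M v])
  also have "\<dots> = (\<Sum>i<n. \<Sum>j<n. v $ j * (M $$ (j,i) * w $ i))"
  proof (rule sum.cong[OF refl])
    fix i assume i: "i \<in> {..<n}"
    show "(\<Sum>j<n. M $$ (i,j) * v $ j) * w $ i = (\<Sum>j<n. v $ j * (M $$ (j,i) * w $ i))"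
      unfolding sum_distrib_right by (rule sum.cong[OF refl]) (use i sym in \<open>auto simp: mult_ac\<close>)
  qed
  also have "\<dots> = (\<Sum>j<n. \<Sum>i<n. v $ j * (M $$ (j,i) * w $ i))"
    by (rule sum.swap)
  also have "\<dots> = (\<Sum>j<n. v $ j * (\<Sum>i<n. M $$ (j,i) * w $ i))"
    by (simp add: sum_distrib_left)
  also have "\<dots> = v \<bullet> (M *\<^sub>v w)"
    using M v w by (simp add: sp_index[of _ n] mat_vec_index[OF M w])
  finally show ?thesis .
qed

lemma unit_col:
  fixes M :: "real mat"
  assumes M: "M \<in> carrier_mat n n" and ij: "i < n" "j < n"
  shows "(M *\<^sub>v unit_vec n j) $ i = M $$ (i,j)"
proof -
  have "(M *\<^sub>v unit_vec n j) $ i = (\<Sum>l<n. M $$ (i,l) * unit_vec n j $ l)"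
    by (rule mat_vec_index[OF M _ ij(1)]) simp
  also have "\<dots> = (\<Sum>l<n. if l = j then M $$ (i,l) else 0)"
    by (intro sum.cong refl) (auto simp: unit_vec_def)
  also have "\<dots> = M $$ (i,j)" using ij by simp
  finally show ?thesis .
qed




lemma smult_mat_vec:
  fixes M :: "real mat"
  assumes M: "M \<in> carrier_mat n n" and v: "v \<in> carrier_vec n"
  shows "(c \<cdot>\<^sub>m M) *\<^sub>v v = c \<cdot>\<^sub>v (M *\<^sub>v v)"
proof (rule eq_vecI)
  fix i assume "i < dim_vec (c \<cdot>\<^sub>v (M *\<^sub>v v))"
  then have i: "i < n" using M by simp
  have cM: "c \<cdot>\<^sub>m M \<in> carrier_mat n n" using M by simp
  show "((c \<cdot>\<^sub>m M) *\<^sub>v v) $ i = (c \<cdot>\<^sub>v (M *\<^sub>v v)) $ i"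
    using i M v by (simp add: mat_vec_index[OF cM v i] mat_vec_index[OF M v i] sum_distrib_left mult_ac)
qed (use M in simp)

lemma eig_proj_char:
  assumes G: "is_graph G" and mu: "\<mu> \<in> set (distinct_eigs G)"
  shows "eig_proj G \<mu> = mpoly (Lag (distinct_eigs G) \<mu>) (adj_mat G)"
proof -
  let ?n = "fst G" and ?A = "adj_mat G" and ?ms = "distinct_eigs G"
  define L where "L = Lag ?ms \<mu>"
  define P0 where "P0 = mpoly L ?A"
  define d where "d = (\<Prod>\<nu>\<leftarrow>filter (\<lambda>\<nu>. \<nu> \<noteq> \<mu>) ?ms. (\<mu> - \<nu>))"
  have A: "?A \<in> carrier_mat ?n ?n" by (rule adj_mat_carrier)
  have P0: "P0 \<in> carrier_mat ?n ?n" unfolding P0_def using A by simp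
  have dist: "distinct ?ms" unfolding distinct_eigs_def by simp
  have LM: "[:- \<mu>, 1:] * L = Polynomial.smult (1 / d) (qq ?ms)"
    unfolding L_def d_def by (rule Lag_mult[OF dist mu])
  have pc: "pCons 0 L = Polynomial.smult (1 / d) (qq ?ms) + Polynomial.smult \<mu> L"
  proof -
    have "[:- \<mu>, 1:] * L = Polynomial.smult (- \<mu>) L + pCons 0 L"
      by (simp add: mult_pCons_left)
    then show ?thesis using LM by (simp add: algebra_simps)
  qed
  have AP: "?A * P0 = \<mu> \<cdot>\<^sub>m P0"
  proof -
    have "?A * P0 = mpoly (pCons 0 L) ?A" unfolding P0_def by (rule mpoly_shift[OF A, symmetric])
    also have "\<dots> = (1 / d) \<cdot>\<^sub>m mpoly (qq ?ms) ?A + \<mu> \<cdot>\<^sub>m P0"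
      unfolding pc P0_def by (simp add: mpoly_add[OF A] mpoly_smult[OF A])
    also have "\<dots> = \<mu> \<cdot>\<^sub>m P0" using F1[OF G] P0 by simp
    finally show ?thesis .
  qed
  have symP0: "P0 $$ (i,j) = P0 $$ (j,i)" if "i < ?n" "j < ?n" for i j
    unfolding P0_def by (rule mpoly_symmetric[OF A adj_mat_transpose[OF G] that])
  have P0v: "P0 *\<^sub>v v \<in> eigenspace G \<mu>" if v: "v \<in> carrier_vec ?n" for v
  proof -
    have "?A *\<^sub>v (P0 *\<^sub>v v) = (?A * P0) *\<^sub>v v" using A P0 v by simp
    also have "\<dots> = \<mu> \<cdot>\<^sub>v (P0 *\<^sub>v v)" unfolding AP by (rule smult_mat_vec[OF P0 v])
    finally show ?thesis unfolding eigenspace_def using P0 v by simp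
  qed
  have P0w: "P0 *\<^sub>v w = w" if w: "w \<in> eigenspace G \<mu>" for w
  proof -
    from w have wc: "w \<in> carrier_vec ?n" and ev: "?A *\<^sub>v w = \<mu> \<cdot>\<^sub>v w"
      unfolding eigenspace_def by auto
    have "P0 *\<^sub>v w = poly L \<mu> \<cdot>\<^sub>v w" unfolding P0_def by (rule mpoly_eigen[OF A wc ev])
    then show ?thesis unfolding L_def Lag_at by simp
  qed
  have prop0: "P0 \<in> carrier_mat ?n ?n \<and> (\<forall>v::real vec \<in> carrier_vec ?n. P0 *\<^sub>v v \<in> eigenspace G \<mu> \<and>
         (\<forall>w \<in> eigenspace G \<mu>. (v - P0 *\<^sub>v v) \<bullet> w = 0))"
  proof (intro conjI ballI P0 P0v)
    fix v :: "real vec" and w assume v: "v \<in> carrier_vec ?n" and w: "w \<in> eigenspace G \<mu>"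
    have wc: "w \<in> carrier_vec ?n" using w unfolding eigenspace_def by auto
    have "(v - P0 *\<^sub>v v) \<bullet> w = v \<bullet> w - (P0 *\<^sub>v v) \<bullet> w"
      by (rule minus_scalar_prod_distrib[OF v _ wc]) (use P0 v in simp)
    also have "(P0 *\<^sub>v v) \<bullet> w = v \<bullet> (P0 *\<^sub>v w)" by (rule sym_sp[OF P0 symP0 v wc])
    also have "\<dots> = v \<bullet> w" using P0w[OF w] by simp
    finally show "(v - P0 *\<^sub>v v) \<bullet> w = 0" by simp
  qed
  have uniq: "P = P0" if hP: "P \<in> carrier_mat ?n ?n \<and> (\<forall>v::real vec \<in> carrier_vec ?n. P *\<^sub>v v \<in> eigenspace G \<mu> \<and>
         (\<forall>w \<in> eigenspace G \<mu>. (v - P *\<^sub>v v) \<bullet> w = 0))" for P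
  proof -
    from hP have P: "P \<in> carrier_mat ?n ?n" by blast
    have col: "P *\<^sub>v v = P0 *\<^sub>v v" if v: "v \<in> carrier_vec ?n" for v
    proof -
      define a where "a = P0 *\<^sub>v v"
      define b where "b = P *\<^sub>v v"
      define u where "u = a - b"
      have ac: "a \<in> carrier_vec ?n" "b \<in> carrier_vec ?n" using P P0 v by (auto simp: a_def b_def)
      have uc: "u \<in> carrier_vec ?n" using ac by (simp add: u_def)
      have ea: "a \<in> eigenspace G \<mu>" unfolding a_def by (rule P0v[OF v])
      have eb: "b \<in> eigenspace G \<mu>" unfolding b_def using hP v by blast
      have ui: "u $ i = a $ i - b $ i" if "i < ?n" for i using that ac by (simp add: u_def)
      have eu: "u \<in> eigenspace G \<mu>"
      proof -
        have Aa: "?A *\<^sub>v a = \<mu> \<cdot>\<^sub>v a" and Ab: "?A *\<^sub>v b = \<mu> \<cdot>\<^sub>v b"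
          using ea eb unfolding eigenspace_def by auto
        have "?A *\<^sub>v u = \<mu> \<cdot>\<^sub>v u"
        proof (rule eq_vecI)
          fix i assume "i < dim_vec (\<mu> \<cdot>\<^sub>v u)"
          then have i: "i < ?n" using uc by simp
          have "(?A *\<^sub>v u) $ i = (\<Sum>j<?n. ?A $$ (i,j) * a $ j) - (\<Sum>j<?n. ?A $$ (i,j) * b $ j)"
            using mat_vec_index[OF A uc i] ui by (simp add: sum_subtractf algebra_simps)
          also have "\<dots> = (?A *\<^sub>v a) $ i - (?A *\<^sub>v b) $ i"
            using mat_vec_index[OF A ac(1) i] mat_vec_index[OF A ac(2) i] by simp
          also have "\<dots> = \<mu> * u $ i" unfolding Aa Ab using i ac ui[OF i] by (simp add: right_diff_distrib)
          finally show "(?A *\<^sub>v u) $ i = (\<mu> \<cdot>\<^sub>v u) $ i" using i uc by simp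
        qed (use uc A in simp)
        then show ?thesis unfolding eigenspace_def using uc by simp
      qed
      have s1: "(v - a) \<bullet> u = 0" unfolding a_def using prop0 v eu by blast
      have s2: "(v - b) \<bullet> u = 0" unfolding b_def using hP v eu by blast
      have "(\<Sum>i<?n. u $ i * u $ i) = (v - b) \<bullet> u - (v - a) \<bullet> u"
        using v ac uc by (simp add: sp_index[of _ ?n] sum_subtractf[symmetric] ui algebra_simps)
      then have "(\<Sum>i<?n. u $ i * u $ i) = 0" using s1 s2 by simp
      then have "\<forall>i\<in>{..<?n}. u $ i * u $ i = 0"
        by (subst (asm) sum_nonneg_eq_0_iff) auto
      then have "\<forall>i<?n. a $ i = b $ i" using ui by auto
      then have "a = b" using ac by (intro eq_vecI) auto
      then show ?thesis unfolding a_def b_def by simp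
    qed
    show "P = P0"
    proof (rule eq_matI)
      fix i j assume "i < dim_row P0" "j < dim_col P0"
      then have ij: "i < ?n" "j < ?n" using P0 by auto
      have "P $$ (i,j) = (P *\<^sub>v unit_vec ?n j) $ i" by (rule unit_col[OF P ij, symmetric])
      also have "\<dots> = (P0 *\<^sub>v unit_vec ?n j) $ i" using col[of "unit_vec ?n j"] by simp
      also have "\<dots> = P0 $$ (i,j)" by (rule unit_col[OF P0 ij])
      finally show "P $$ (i,j) = P0 $$ (i,j)" .
    qed (use P P0 in auto)
  qed
  show ?thesis unfolding eig_proj_def P0_def[symmetric] L_def[symmetric]
    by (rule the_equality) (use prop0 uniq in blast)+
qed




lemma card_set_mset_le: "card (set_mset M) \<le> size M"
proof -
  obtain xs where "mset xs = M" using ex_mset by blast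
  then show ?thesis using card_length[of xs] by auto
qed

lemma msum_single:
  fixes f :: "'a \<Rightarrow> real"
  assumes "\<And>t. t \<in># S \<Longrightarrow> t \<noteq> v \<Longrightarrow> f t = 0"
  shows "sum_mset (image_mset f S) = real (count S v) * f v"
  using assms
proof (induction S)
  case empty then show ?case by simp
next
  case (add a S)
  have IH: "sum_mset (image_mset f S) = real (count S v) * f v"
    using add.IH add.prems by auto
  show ?case
  proof (cases "a = v")
    case True then show ?thesis using IH by (simp add: algebra_simps)
  next
    case False then have "f a = 0" using add.prems by simp
    then show ?thesis using IH False by simp
  qed
qed

lemma msum_sum:
  fixes g :: "nat \<Rightarrow> 'a \<Rightarrow> real"
  shows "sum_mset (image_mset (\<lambda>t. \<Sum>k\<in>K. g k t) S) = (\<Sum>k\<in>K. sum_mset (image_mset (g k) S))"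
  by (induction S) (simp_all add: sum.distrib)

lemma msum_cmult:
  fixes f :: "'a \<Rightarrow> real"
  shows "sum_mset (image_mset (\<lambda>t. c * f t) S) = c * sum_mset (image_mset f S)"
  by (induction S) (simp_all add: algebra_simps)

lemma poly_msum:
  fixes q :: "real poly"
  assumes "degree q < N"
  shows "sum_mset (image_mset (poly q) S) = (\<Sum>k<N. coeff q k * sum_mset (image_mset (\<lambda>t. t ^ k) S))"
proof -
  have "poly q t = (\<Sum>k<N. coeff q k * t ^ k)" for t
    using sum_coeff_bound[OF assms, of "\<lambda>k. t ^ k"] by (simp add: poly_altdef lessThan_Suc_atMost)
  then have eq: "poly q = (\<lambda>t. \<Sum>k<N. coeff q k * t ^ k)" by (rule ext)
  have "sum_mset (image_mset (poly q) S) = sum_mset (image_mset (\<lambda>t. \<Sum>k<N. coeff q k * t ^ k) S)"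
    by (subst eq) (rule refl)
  also have "\<dots> = (\<Sum>k<N. sum_mset (image_mset (\<lambda>t. coeff q k * t ^ k) S))" by (rule msum_sum)
  also have "\<dots> = (\<Sum>k<N. coeff q k * sum_mset (image_mset (\<lambda>t. t ^ k) S))"
    by (simp only: msum_cmult)
  finally show ?thesis .
qed

lemma power_sums_eq:
  fixes S T :: "real multiset"
  assumes sS: "size S \<le> n" and sT: "size T \<le> n"
    and ps: "\<And>k. k \<le> 2 * n \<Longrightarrow> sum_mset (image_mset (\<lambda>t. t ^ k) S) = sum_mset (image_mset (\<lambda>t. t ^ k) T)"
  shows "S = T"
proof (rule multiset_eqI)
  fix v
  define U where "U = (set_mset S \<union> set_mset T) - {v}"
  define us where "us = sorted_list_of_set U"
  define q where "q = (\<Prod>u\<leftarrow>us. [:- u, 1:])"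
  have finU: "finite U" unfolding U_def by simp
  have cU: "card U \<le> 2 * n"
  proof -
    have "card U \<le> card (set_mset S \<union> set_mset T)" unfolding U_def by (rule card_mono) auto
    also have "\<dots> \<le> card (set_mset S) + card (set_mset T)" by (rule card_Un_le)
    also have "\<dots> \<le> 2 * n" using card_set_mset_le[of S] card_set_mset_le[of T] sS sT by simp
    finally show ?thesis .
  qed
  have dq: "degree q < Suc (2 * n)"
  proof -
    have "degree q = length us" unfolding q_def by (rule degree_linear_factors)
    also have "\<dots> = card U" unfolding us_def by simp
    finally show ?thesis using cU by simp
  qed
  have sus: "set us = U" unfolding us_def using finU by simp
  have pq: "poly q t = (\<Prod>u\<leftarrow>us. t - u)" for t unfolding q_def by (simp add: poly_prod_list o_def)
  have zero: "poly q t = 0" if "t \<in> U" for t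
  proof -
    have "t \<in> set us" using sus that by simp
    then have "0 \<in> set (map (\<lambda>u. t - u) us)" by force
    then show ?thesis unfolding pq by (simp only: prod_list_zero_iff)
  qed
  have nz: "poly q v \<noteq> 0"
  proof -
    have "v \<notin> set us" using sus unfolding U_def by blast
    then have "0 \<notin> set (map (\<lambda>u. v - u) us)" by auto
    then show ?thesis unfolding pq by (simp only: prod_list_zero_iff not_False_eq_True)
  qed
  have "sum_mset (image_mset (poly q) S) = sum_mset (image_mset (poly q) T)"
    unfolding poly_msum[OF dq] using ps by simp
  moreover have "sum_mset (image_mset (poly q) S) = real (count S v) * poly q v"
    by (rule msum_single) (auto intro: zero simp: U_def)
  moreover have "sum_mset (image_mset (poly q) T) = real (count T v) * poly q v"
    by (rule msum_single) (auto intro: zero simp: U_def)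
  ultimately show "count S v = count T v" using nz by simp
qed

lemma qq_dvd:
  assumes "distinct ms" "\<And>m. m \<in> set ms \<Longrightarrow> poly p m = 0"
  shows "qq ms dvd p"
  using assms
proof (induction ms arbitrary: p)
  case Nil then show ?case by (simp add: qq_def)
next
  case (Cons m ms)
  have "[:- m, 1:] dvd p" using Cons.prems(2) by (simp add: poly_eq_0_iff_dvd[symmetric])
  then obtain p1 where p1: "p = [:- m, 1:] * p1" by (elim dvdE)
  have "poly p1 m' = 0" if "m' \<in> set ms" for m'
  proof -
    have "poly p m' = 0" using Cons.prems(2) that by simp
    moreover have "m' \<noteq> m" using Cons.prems(1) that by auto
    ultimately show ?thesis unfolding p1 by simp
  qed
  then have "qq ms dvd p1" using Cons.IH[of p1] Cons.prems(1) by simp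
  moreover have "qq (m # ms) = [:- m, 1:] * qq ms" by (simp add: qq_def)
  ultimately show ?case unfolding p1 by (metis mult_dvd_mono dvd_refl)
qed

lemma mpoly_zero:
  assumes A: "A \<in> carrier_mat n n"
  shows "mpoly 0 A = 0\<^sub>m n n"
  using A by (intro eq_matI) (auto simp: mpoly_def)

lemma mpoly_mult_zero:
  fixes A :: "'a::comm_ring_1 mat"
  assumes A: "A \<in> carrier_mat n n" and q: "mpoly q A = 0\<^sub>m n n"
  shows "mpoly (h * q) A = 0\<^sub>m n n"
proof (induction h)
  case (pCons a h)
  have "pCons a h * q = Polynomial.smult a q + pCons 0 (h * q)" by (simp add: mult_pCons_left)
  then have "mpoly (pCons a h * q) A = a \<cdot>\<^sub>m mpoly q A + A * mpoly (h * q) A"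
    by (simp add: mpoly_add[OF A] mpoly_smult[OF A] mpoly_shift[OF A])
  also have "\<dots> = 0\<^sub>m n n" using pCons.IH q A by simp
  finally show ?case .
qed (use A in \<open>simp add: mpoly_zero\<close>)

lemma mpoly_cong_dvd:
  fixes A :: "'a::comm_ring_1 mat"
  assumes A: "A \<in> carrier_mat n n" and q: "mpoly q A = 0\<^sub>m n n" and d: "q dvd (p1 - p2)"
  shows "mpoly p1 A = mpoly p2 A"
proof -
  obtain h where h: "p1 - p2 = q * h" using d by (elim dvdE)
  have "p1 = p2 + h * q" using h by (simp add: algebra_simps)
  then have "mpoly p1 A = mpoly p2 A + mpoly (h * q) A" by (simp add: mpoly_add[OF A])
  then show ?thesis using mpoly_mult_zero[OF A q] A by simp
qed




lemma walk_sym: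
  assumes G: "is_graph G" and xy: "x < fst G" "y < fst G"
  shows "num_walks G k x y = num_walks G k y x"
proof -
  let ?A = "adj_mat G"
  have A: "?A \<in> carrier_mat (fst G) (fst G)" by (rule adj_mat_carrier)
  have "(?A ^\<^sub>m k) $$ (y,x) = transpose_mat (?A ^\<^sub>m k) $$ (x,y)" using xy A by simp
  also have "\<dots> = (?A ^\<^sub>m k) $$ (x,y)" using transpose_pow[OF A, of k] adj_mat_transpose[OF G] by simp
  finally show ?thesis using adj_pow_walks[OF G xy] adj_pow_walks[OF G xy(2,1)] by simp
qed

lemma walk_add:
  assumes G: "is_graph G" and x: "x < fst G"
  shows "num_walks G (j + l) x x = (\<Sum>y\<in>verts G. num_walks G j x y * num_walks G l x y)"
proof -
  let ?A = "adj_mat G" and ?n = "fst G"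
  have A: "?A \<in> carrier_mat ?n ?n" by (rule adj_mat_carrier)
  have "real (num_walks G (j + l) x x) = (?A ^\<^sub>m j * ?A ^\<^sub>m l) $$ (x,x)"
    using adj_pow_walks[OF G x x, of "j + l"] pow_add_mat[OF A, of j l] by simp
  also have "\<dots> = (\<Sum>y<?n. (?A ^\<^sub>m j) $$ (x,y) * (?A ^\<^sub>m l) $$ (y,x))"
    by (rule mat_mult_index) (use A x in auto)
  also have "\<dots> = (\<Sum>y<?n. real (num_walks G j x y * num_walks G l x y))"
    by (intro sum.cong refl) (simp add: adj_pow_walks[OF G] x walk_sym[OF G, of _ x])
  also have "\<dots> = real (\<Sum>y\<in>verts G. num_walks G j x y * num_walks G l x y)"
    by (simp add: verts_def lessThan_atLeast0)
  finally show ?thesis by (simp only: of_nat_eq_iff)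
qed

lemma size_mset_verts: "size (image_mset f (mset_set (verts G))) = fst G"
  by (simp add: verts_def)

lemma WL1_col_unfold: "WL1_col G c = image_mset (cr_color G c (fst G)) (mset_set (verts G))"
  by (simp add: WL1_col_def)

lemma wl_local:
  assumes G: "is_graph G" and H: "is_graph H" and n: "fst G = fst H"
    and x: "x \<in> verts G" and x': "x' \<in> verts H"
    and eq: "WL1_col G (individualize x) = WL1_col H (individualize x')"
  shows "cr_color G (individualize x) (fst G) x = cr_color H (individualize x') (fst H) x'"
    and "\<And>k. k \<le> 2 * fst G \<Longrightarrow> num_walks G k x x = num_walks H k x' x'"
proof -
  let ?c = "individualize x" and ?c' = "individualize x'" and ?n = "fst G"
  have eq': "image_mset (cr_color G ?c ?n) (mset_set (verts G)) = image_mset (cr_color H ?c' ?n) (mset_set (verts H))"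
    using eq n by (simp add: WL1_col_unfold)
  have "cr_color G ?c ?n x \<in># image_mset (cr_color H ?c' ?n) (mset_set (verts H))"
    unfolding eq'[symmetric] using x by simp
  then obtain y' where y': "y' \<in> verts H" and cy: "cr_color H ?c' ?n y' = cr_color G ?c ?n x"
    by auto
  have "?c' y' = 1" using base_cr[of H ?c' ?n y'] base_cr[of G ?c ?n x] cy
    by (simp add: individualize_def)
  then have "y' = x'" by (simp add: individualize_def split: if_splits)
  then show cxx: "cr_color G ?c ?n x = cr_color H ?c' (fst H) x'" using cy n by simp
  fix k assume k: "k \<le> 2 * ?n"
  define j where "j = min k ?n"
  define l where "l = k - j"
  have jl: "k = j + l" "j \<le> ?n" "l \<le> ?n" using k by (auto simp: j_def l_def)
  have xn: "x < ?n" "x' < fst H" using x x' by (auto simp: verts_def)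
  have "num_walks G k x x = (\<Sum>y\<in>verts G. num_walks G j x y * num_walks G l x y)"
    unfolding jl(1) by (rule walk_add[OF G xn(1)])
  also have "\<dots> = sum_mset (image_mset (\<lambda>y. num_walks G j x y * num_walks G l x y) (mset_set (verts G)))"
    by (rule sum_unfold_sum_mset)
  also have "\<dots> = sum_mset (image_mset (\<lambda>y. num_walks H j x' y * num_walks H l x' y) (mset_set (verts H)))"
  proof (rule msum_transfer[OF eq'])
    fix a b assume a: "a \<in># mset_set (verts G)" and b: "b \<in># mset_set (verts H)"
      and ab: "cr_color G ?c ?n a = cr_color H ?c' ?n b"
    have a': "a \<in> verts G" and b': "b \<in> verts H" using a b by auto
    have ab': "cr_color G ?c ?n a = cr_color H ?c' ?n b" using ab by simp
    show "num_walks G j x a * num_walks G l x a = num_walks H j x' b * num_walks H l x' b"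
      using color_walks[OF G H x x' a' b' ab' jl(2)] color_walks[OF G H x x' a' b' ab' jl(3)] by simp
  qed
  also have "\<dots> = (\<Sum>y\<in>verts H. num_walks H j x' y * num_walks H l x' y)"
    by (rule sum_unfold_sum_mset[symmetric])
  also have "\<dots> = num_walks H k x' x'"
    unfolding jl(1) by (rule walk_add[OF H xn(2), symmetric])
  finally show "num_walks G k x x = num_walks H k x' x'" .
qed




lemma trace_walks:
  assumes G: "is_graph G"
  shows "sum_mset (image_mset (\<lambda>t. t ^ k) (Spec G)) = real (\<Sum>x\<in>verts G. num_walks G k x x)"
proof -
  have "sum_mset (image_mset (\<lambda>t. t ^ k) (Spec G)) = mtrace (adj_mat G ^\<^sub>m k)"
    using spec_facts[OF G] by simp
  also have "\<dots> = (\<Sum>x<fst G. (adj_mat G ^\<^sub>m k) $$ (x,x))"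
    unfolding mtrace_def by (simp add: adj_mat_def)
  also have "\<dots> = (\<Sum>x<fst G. real (num_walks G k x x))"
    by (intro sum.cong refl) (simp add: adj_pow_walks[OF G])
  also have "\<dots> = real (\<Sum>x\<in>verts G. num_walks G k x x)"
    by (simp add: verts_def lessThan_atLeast0)
  finally show ?thesis .
qed

lemma size_Spec: "is_graph G \<Longrightarrow> size (Spec G) = fst G"
  using spec_facts by blast

lemma length_eigs: "is_graph G \<Longrightarrow> length (distinct_eigs G) \<le> fst G"
  unfolding distinct_eigs_def using card_set_mset_le[of "Spec G"] size_Spec[of G] by simp

definition PF :: "real list \<Rightarrow> nat \<Rightarrow> (nat \<Rightarrow> nat) \<Rightarrow> real list" where
  "PF ms n wfn = map (\<lambda>\<mu>. \<Sum>k<Suc n. coeff (Lag ms \<mu>) k * real (wfn k)) ms"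

lemma Pstar_PF:
  assumes G: "is_graph G" and xy: "x < fst G" "y < fst G"
  shows "Pstar G x y = PF (distinct_eigs G) (fst G) (\<lambda>k. num_walks G k x y)"
  unfolding Pstar_def PF_def
proof (rule map_cong[OF refl])
  fix \<mu> assume mu: "\<mu> \<in> set (distinct_eigs G)"
  let ?A = "adj_mat G"
  have A: "?A \<in> carrier_mat (fst G) (fst G)" by (rule adj_mat_carrier)
  have d: "degree (Lag (distinct_eigs G) \<mu>) < Suc (fst G)"
    using Lag_degree[of "distinct_eigs G" \<mu>] length_eigs[OF G] by simp
  show "eig_proj G \<mu> $$ (x, y) = (\<Sum>k<Suc (fst G). coeff (Lag (distinct_eigs G) \<mu>) k * real (num_walks G k x y))"
    unfolding eig_proj_char[OF G mu] mpoly_index[OF A xy d]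
    by (intro sum.cong refl) (simp add: adj_pow_walks[OF G xy])
qed

lemma partA:
  assumes G: "is_graph G" and H: "is_graph H" and wl: "WL_3_2 G = WL_3_2 H"
  shows "F_weak G = F_weak H"
proof -
  let ?f = "\<lambda>x. WL1_col G (individualize x)" and ?g = "\<lambda>x. WL1_col H (individualize x)"
  have wl': "image_mset ?f (mset_set (verts G)) = image_mset ?g (mset_set (verts H))"
    using wl unfolding WL_3_2_def .
  have n: "fst G = fst H" using arg_cong[OF wl', of size] by (simp add: verts_def)
  let ?n = "fst G"
  have tr: "real (\<Sum>x\<in>verts G. num_walks G k x x) = real (\<Sum>x\<in>verts H. num_walks H k x x)"
    if k: "k \<le> 2 * ?n" for k
  proof -
    have "(\<Sum>x\<in>verts G. num_walks G k x x) = sum_mset (image_mset (\<lambda>x. num_walks G k x x) (mset_set (verts G)))"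
      by (rule sum_unfold_sum_mset)
    also have "\<dots> = sum_mset (image_mset (\<lambda>x. num_walks H k x x) (mset_set (verts H)))"
    proof (rule msum_transfer[OF wl'])
      fix a b assume "a \<in># mset_set (verts G)" "b \<in># mset_set (verts H)" "?f a = ?g b"
      then show "num_walks G k a a = num_walks H k b b"
        using wl_local(2)[OF G H n _ _ _ k] by auto
    qed
    also have "\<dots> = (\<Sum>x\<in>verts H. num_walks H k x x)"
      by (rule sum_unfold_sum_mset[symmetric])
    finally show ?thesis by simp
  qed
  have Spec: "Spec G = Spec H"
  proof (rule power_sums_eq[of _ ?n])
    show "size (Spec G) \<le> ?n" using size_Spec[OF G] by simp
    show "size (Spec H) \<le> ?n" using size_Spec[OF H] n by simp
    fix k assume "k \<le> 2 * ?n"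
    then show "sum_mset (image_mset (\<lambda>t. t ^ k) (Spec G)) = sum_mset (image_mset (\<lambda>t. t ^ k) (Spec H))"
      using tr trace_walks[OF G] trace_walks[OF H] by simp
  qed
  have ms: "distinct_eigs G = distinct_eigs H" unfolding distinct_eigs_def Spec ..
  let ?ms = "distinct_eigs G"
  have main: "image_mset (\<lambda>x. (Pstar G x x, image_mset (Pstar G x) (mset_set (verts G)))) (mset_set (verts G))
      = image_mset (\<lambda>x. (Pstar H x x, image_mset (Pstar H x) (mset_set (verts H)))) (mset_set (verts H))"
  proof (rule mset_transfer[OF wl'])
    fix x x' assume x: "x \<in># mset_set (verts G)" and x': "x' \<in># mset_set (verts H)" and eq: "?f x = ?g x'"
    then have xv: "x \<in> verts G" and xv': "x' \<in> verts H" by auto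
    then have xn: "x < ?n" and xn': "x' < ?n" using n by (auto simp: verts_def)
    let ?c = "individualize x" and ?c' = "individualize x'"
    have eq': "image_mset (cr_color G ?c ?n) (mset_set (verts G)) = image_mset (cr_color H ?c' ?n) (mset_set (verts H))"
      using eq n by (simp add: WL1_col_unfold)
    have cw: "num_walks G k x y = num_walks H k x' y'"
      if "y \<in> verts G" "y' \<in> verts H" "cr_color G ?c ?n y = cr_color H ?c' ?n y'" "k < Suc ?n" for y y' k
      using color_walks[OF G H xv xv' that(1,2,3)] that(4) by simp
    have P: "Pstar G x y = Pstar H x' y'"
      if y: "y \<in> verts G" "y' \<in> verts H" "cr_color G ?c ?n y = cr_color H ?c' ?n y'" for y y'
    proof -
      have yn: "y < ?n" "y' < fst H" using y n by (auto simp: verts_def)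
      have xh: "x' < fst H" using xn' n by simp
      show ?thesis
        unfolding Pstar_PF[OF G xn yn(1)] Pstar_PF[OF H xh yn(2)] ms n[symmetric]
        unfolding PF_def using cw[OF y] by (intro map_cong refl sum.cong) auto
    qed
    have c0: "cr_color G ?c ?n x = cr_color H ?c' ?n x'"
      using wl_local(1)[OF G H n xv xv' eq] n by simp
    have "Pstar G x x = Pstar H x' x'" by (rule P[OF xv xv' c0])
    moreover have "image_mset (Pstar G x) (mset_set (verts G)) = image_mset (Pstar H x') (mset_set (verts H))"
      by (rule mset_transfer[OF eq']) (use P in auto)
    ultimately show "(Pstar G x x, image_mset (Pstar G x) (mset_set (verts G))) =
      (Pstar H x' x', image_mset (Pstar H x') (mset_set (verts H)))" by simp
  qed
  show ?thesis unfolding F_weak_def Spec main ..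
qed




lemma mpoly_sum_entry:
  assumes A: "A \<in> carrier_mat n n" and xy: "x < n" "y < n" and I: "finite I"
  shows "mpoly (\<Sum>i\<in>I. f i) A $$ (x,y) = (\<Sum>i\<in>I. mpoly (f i) A $$ (x,y))"
  using I
proof (induction I rule: finite_induct)
  case empty then show ?case using mpoly_zero[OF A] xy by simp
next
  case (insert a I)
  then show ?case using mpoly_add[OF A, of "f a" "\<Sum>i\<in>I. f i"] xy A by simp
qed

lemma pow_decomp:
  assumes G: "is_graph G" and xy: "x < fst G" "y < fst G"
  shows "(adj_mat G ^\<^sub>m k) $$ (x,y) =
    (\<Sum>i<length (distinct_eigs G). (distinct_eigs G ! i) ^ k * eig_proj G (distinct_eigs G ! i) $$ (x,y))"
proof -
  let ?ms = "distinct_eigs G" and ?A = "adj_mat G" and ?n = "fst G"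
  let ?m = "length ?ms"
  have A: "?A \<in> carrier_mat ?n ?n" by (rule adj_mat_carrier)
  have dist: "distinct ?ms" unfolding distinct_eigs_def by simp
  define R where "R = (\<Sum>i<?m. Polynomial.smult ((?ms ! i) ^ k) (Lag ?ms (?ms ! i)))"
  have root: "poly (monom 1 k - R) \<mu> = 0" if mu: "\<mu> \<in> set ?ms" for \<mu>
  proof -
    obtain j where j: "j < ?m" "\<mu> = ?ms ! j" using mu by (auto simp: in_set_conv_nth)
    have "poly R \<mu> = (\<Sum>i<?m. (?ms ! i) ^ k * poly (Lag ?ms (?ms ! i)) \<mu>)"
      unfolding R_def by (simp add: poly_sum)
    also have "\<dots> = (\<Sum>i<?m. if i = j then \<mu> ^ k else 0)"
    proof (intro sum.cong refl)
      fix i assume i: "i \<in> {..<?m}"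
      show "(?ms ! i) ^ k * poly (Lag ?ms (?ms ! i)) \<mu> = (if i = j then \<mu> ^ k else 0)"
      proof (cases "i = j")
        case True then show ?thesis using j by (simp add: Lag_at)
      next
        case False
        then have "?ms ! j \<noteq> ?ms ! i" using dist j i by (simp add: nth_eq_iff_index_eq)
        then show ?thesis using False j mu by (simp add: Lag_other)
      qed
    qed
    also have "\<dots> = \<mu> ^ k" using j by simp
    finally show ?thesis by (simp add: poly_monom)
  qed
  have "mpoly (monom 1 k) ?A = mpoly R ?A"
    by (rule mpoly_cong_dvd[OF A F1[OF G]]) (rule qq_dvd[OF dist root])
  then have "(?A ^\<^sub>m k) $$ (x,y) = mpoly R ?A $$ (x,y)" using mpoly_monom[OF A] by simp
  also have "\<dots> = (\<Sum>i<?m. mpoly (Polynomial.smult ((?ms ! i) ^ k) (Lag ?ms (?ms ! i))) ?A $$ (x,y))"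
    unfolding R_def by (rule mpoly_sum_entry[OF A xy]) simp
  also have "\<dots> = (\<Sum>i<?m. (?ms ! i) ^ k * eig_proj G (?ms ! i) $$ (x,y))"
  proof (intro sum.cong refl)
    fix i assume "i \<in> {..<?m}"
    then have mi: "?ms ! i \<in> set ?ms" by simp
    show "mpoly (Polynomial.smult ((?ms ! i) ^ k) (Lag ?ms (?ms ! i))) ?A $$ (x,y) = (?ms ! i) ^ k * eig_proj G (?ms ! i) $$ (x,y)"
      unfolding mpoly_smult[OF A] eig_proj_char[OF G mi] using xy A by simp
  qed
  finally show ?thesis .
qed

lemma W_formula:
  assumes G: "is_graph G" and x: "x < fst G"
  shows "real (W G x k) = (\<Sum>i<length (distinct_eigs G). (distinct_eigs G ! i) ^ k *
      sum_mset (image_mset (\<lambda>l. l ! i) (image_mset (Pstar G x) (mset_set (verts G)))))"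
proof -
  let ?ms = "distinct_eigs G" and ?A = "adj_mat G" and ?n = "fst G"
  let ?m = "length ?ms"
  have "real (W G x k) = (\<Sum>y<?n. (?A ^\<^sub>m k) $$ (x,y))"
    unfolding W_def by (simp add: adj_pow_walks[OF G x] verts_def lessThan_atLeast0)
  also have "\<dots> = (\<Sum>y<?n. \<Sum>i<?m. (?ms ! i) ^ k * eig_proj G (?ms ! i) $$ (x,y))"
    by (intro sum.cong refl) (simp add: pow_decomp[OF G x])
  also have "\<dots> = (\<Sum>i<?m. (?ms ! i) ^ k * (\<Sum>y<?n. Pstar G x y ! i))"
    by (subst sum.swap) (simp add: sum_distrib_left Pstar_def)
  also have "\<dots> = (\<Sum>i<?m. (?ms ! i) ^ k * sum_mset (image_mset (\<lambda>l. l ! i) (image_mset (Pstar G x) (mset_set (verts G)))))"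
  proof (intro sum.cong refl arg_cong2[where f="(*)"])
    fix i
    have "(\<Sum>y<?n. Pstar G x y ! i) = (\<Sum>y\<in>verts G. Pstar G x y ! i)"
      by (simp add: verts_def lessThan_atLeast0)
    also have "\<dots> = sum_mset (image_mset (\<lambda>y. Pstar G x y ! i) (mset_set (verts G)))"
      by (rule sum_unfold_sum_mset)
    also have "\<dots> = sum_mset (image_mset (\<lambda>l. l ! i) (image_mset (Pstar G x) (mset_set (verts G))))"
      by (simp add: image_mset.compositionality o_def)
    finally show "(\<Sum>y<?n. Pstar G x y ! i) = sum_mset (image_mset (\<lambda>l. l ! i) (image_mset (Pstar G x) (mset_set (verts G))))" .
  qed
  finally show ?thesis .
qed

lemma partB:
  assumes G: "is_graph G" and H: "is_graph H" and F: "F_weak G = F_weak H"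
  shows "WM G = WM H"
proof -
  have Spec: "Spec G = Spec H" and
    img: "image_mset (\<lambda>x. (Pstar G x x, image_mset (Pstar G x) (mset_set (verts G)))) (mset_set (verts G))
      = image_mset (\<lambda>x. (Pstar H x x, image_mset (Pstar H x) (mset_set (verts H)))) (mset_set (verts H))"
    using F unfolding F_weak_def by simp_all
  have n: "fst G = fst H" using size_Spec[OF G] size_Spec[OF H] Spec by simp
  have ms: "distinct_eigs G = distinct_eigs H" unfolding distinct_eigs_def Spec ..
  show ?thesis unfolding WM_def
  proof (rule mset_transfer[OF img])
    fix x x' assume x: "x \<in># mset_set (verts G)" and x': "x' \<in># mset_set (verts H)"
      and eq: "(Pstar G x x, image_mset (Pstar G x) (mset_set (verts G))) =
               (Pstar H x' x', image_mset (Pstar H x') (mset_set (verts H)))"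
    have xn: "x < fst G" and xn': "x' < fst H" using x x' by (auto simp: verts_def)
    have "W G x k = W H x' k" for k
      using W_formula[OF G xn, of k] W_formula[OF H xn', of k] eq ms by simp
    then show "map (W G x) [0..<fst G] = map (W H x') [0..<fst H]" using n by simp
  qed
qed

theorem corollary4p5:
  shows "\<forall>G H. is_graph G \<and> is_graph H \<longrightarrow>
           (WL_3_2 G = WL_3_2 H \<longrightarrow> F_weak G = F_weak H) \<and>
           (F_weak G = F_weak H \<longrightarrow> WM G = WM H)"
  using partA partB by blast


end
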